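(* Let $L>0$, $M>0$, $N>0$ be constants and $p\in L^1[0,L]$. Then the problem $$y^{(4)}(x)-My''(x)+N\int_0^L y(t)\,dt=p(x)\ \ \text{for a.e. } x\in(0,L),\qquad y(0)=y(L)=y''(0)=y''(L)=0,$$ has a unique solution $y\in W^{4,1}[0,L]$, given by $$y(x)=\int_0^L G(x,s)p(s)\,ds-\frac{N\int_0^L G(x,s)\,ds}{1+N\int_0^L\!\int_0^L G(x,s)\,ds\,dx}\int_0^L\!\int_0^L G(x,s)p(s)\,ds\,dx,\qquad x\in[0,L].$$
   Context: $G$ is the function $$G(x,s)=\begin{cases}\dfrac{x(L-s)}{ML}-\dfrac{\sinh(\sqrt M x)\sinh(\sqrt M(L-s))}{M\sqrt M\sinh(\sqrt M L)}, & 0\le x\le s\le L,\\[2mm] \dfrac{s(L-x)}{ML}-\dfrac{\sinh(\sqrt M s)\sinh(\sqrt M(L-x))}{M\sqrt M\sinh(\sqrt M L)}, & 0\le s\le x\le L.\end{cases}$$ *)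

theory Defs
  imports "HOL-Analysis.Analysis"
begin

definition G :: "real \<Rightarrow> real \<Rightarrow> real \<Rightarrow> real \<Rightarrow> real" where
  "G L M x s =
    (if x \<le> s then
       x * (L - s) / (M * L)
       - sinh (sqrt M * x) * sinh (sqrt M * (L - s)) / (M * sqrt M * sinh (sqrt M * L))
     else
       s * (L - x) / (M * L)
       - sinh (sqrt M * s) * sinh (sqrt M * (L - x)) / (M * sqrt M * sinh (sqrt M * L)))"

definition abs_cont_on :: "real set \<Rightarrow> (real \<Rightarrow> real) \<Rightarrow> bool" where
  "abs_cont_on S f \<longleftrightarrow>
    (\<forall>\<epsilon>>0. \<exists>\<delta>>0. \<forall>(n::nat) (a::nat \<Rightarrow> real) (b::nat \<Rightarrow> real).
       (\<forall>i<n. a i \<in> S \<and> b i \<in> S \<and> a i \<le> b i) \<and>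
       (\<forall>i<n. \<forall>j<n. i \<noteq> j \<longrightarrow> b i \<le> a j \<or> b j \<le> a i) \<and>
       (\<Sum>i<n. b i - a i) < \<delta>
       \<longrightarrow> (\<Sum>i<n. \<bar>f (b i) - f (a i)\<bar>) < \<epsilon>)"

text \<open>y is a W^{4,1}[0,L] solution of the boundary value problem:
  y, y', y'' are differentiable on [0,L] (one-sided at the endpoints) with derivatives
  y1, y2, y3, the third derivative y3 is absolutely continuous on [0,L],
  and for a.e. x in (0,L) the fourth derivative y3'(x) exists and satisfies the equation.\<close>
definition bvp_solution ::
  "real \<Rightarrow> real \<Rightarrow> real \<Rightarrow> (real \<Rightarrow> real) \<Rightarrow> (real \<Rightarrow> real) \<Rightarrow> bool" where
  "bvp_solution L M N p y \<longleftrightarrow>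
    (\<exists>y1 y2 y3.
       (\<forall>x\<in>{0..L}. (y has_real_derivative y1 x) (at x within {0..L})) \<and>
       (\<forall>x\<in>{0..L}. (y1 has_real_derivative y2 x) (at x within {0..L})) \<and>
       (\<forall>x\<in>{0..L}. (y2 has_real_derivative y3 x) (at x within {0..L})) \<and>
       abs_cont_on {0..L} y3 \<and>
       (AE x in lebesgue. x \<in> {0<..<L} \<longrightarrow>
          (\<exists>y4. (y3 has_real_derivative y4) (at x) \<and>
                y4 - M * y2 x + N * (LINT t:{0..L}|lebesgue. y t) = p x)) \<and>
       y 0 = 0 \<and> y L = 0 \<and> y2 0 = 0 \<and> y2 L = 0)"

end

theory Submission
  imports Defs
begin

lemma deriv0_eps:
  fixes h :: "real \<Rightarrow> real"
  assumes "(h has_real_derivative 0) (at s)" "\<epsilon> > 0"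
  shows "\<exists>d>0. \<forall>y. \<bar>y - s\<bar> < d \<longrightarrow> \<bar>h y - h s\<bar> \<le> \<epsilon> * \<bar>y - s\<bar>"
proof -
  have "((\<lambda>y. (h y - h s) / (y - s)) \<longlongrightarrow> 0) (at s)"
    using assms(1) by (simp add: has_field_derivative_iff)
  from LIM_D[OF this assms(2)] obtain d where d: "d > 0"
    "\<And>y. y \<noteq> s \<and> norm (y - s) < d \<Longrightarrow> norm ((h y - h s) / (y - s) - 0) < \<epsilon>" by blast
  show ?thesis
  proof (intro exI[of _ d] conjI allI impI)
    fix y assume "\<bar>y - s\<bar> < d"
    show "\<bar>h y - h s\<bar> \<le> \<epsilon> * \<bar>y - s\<bar>"
    proof (cases "y = s")
      case False
      then have "\<bar>(h y - h s) / (y - s)\<bar> < \<epsilon>" using d \<open>\<bar>y - s\<bar> < d\<close> by auto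
      then show ?thesis using False by (simp add: abs_divide divide_less_eq)
    qed simp
  qed (use d in auto)
qed

lemma sum_intervals_le_measure:
  fixes \<alpha> \<beta> :: "nat \<Rightarrow> real"
  assumes T: "T \<in> lmeasurable"
    and sub: "\<And>i. i < n \<Longrightarrow> \<alpha> i \<le> \<beta> i \<and> {\<alpha> i..\<beta> i} \<subseteq> T"
    and disj: "\<And>i j. i < n \<Longrightarrow> j < n \<Longrightarrow> i \<noteq> j \<Longrightarrow> \<beta> i \<le> \<alpha> j \<or> \<beta> j \<le> \<alpha> i"
  shows "(\<Sum>i<n. \<beta> i - \<alpha> i) \<le> measure lebesgue T"
proof -
  have "(\<Sum>i<n. \<beta> i - \<alpha> i) = (\<Sum>i<n. measure lebesgue {\<alpha> i<..\<beta> i})"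
    using sub by (intro sum.cong) auto
  also have "\<dots> = measure lebesgue (\<Union>i<n. {\<alpha> i<..\<beta> i})"
  proof (rule measure_finite_Union[symmetric])
    show "disjoint_family_on (\<lambda>i. {\<alpha> i<..\<beta> i}) {..<n}"
      unfolding disjoint_family_on_def
    proof (intro ballI impI)
      fix i j assume "i \<in> {..<n}" "j \<in> {..<n}" "i \<noteq> j"
      then have "\<beta> i \<le> \<alpha> j \<or> \<beta> j \<le> \<alpha> i" using disj by auto
      then show "{\<alpha> i<..\<beta> i} \<inter> {\<alpha> j<..\<beta> j} = {}" by auto
    qed
  qed (use sub in \<open>auto simp: emeasure_lborel_Ioc\<close>)
  also have "\<dots> \<le> measure lebesgue T"
  proof (rule measure_mono_fmeasurable)
    show "(\<Union>i<n. {\<alpha> i<..\<beta> i}) \<subseteq> T" using sub by fastforce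
  qed (use T in auto)
  finally show ?thesis .
qed

lemma ac_deriv0_const:
  fixes h :: "real \<Rightarrow> real" and a b :: real
  assumes ab: "a \<le> b" and ac: "abs_cont_on {a..b} h"
    and N: "negligible N"
    and d0: "\<And>x. x \<in> {a<..<b} \<Longrightarrow> x \<notin> N \<Longrightarrow> (h has_real_derivative 0) (at x)"
  shows "h b = h a"
proof -
  have key: "\<bar>h b - h a\<bar> \<le> \<epsilon> * (b - a) + \<epsilon>" if \<epsilon>: "\<epsilon> > 0" for \<epsilon>
  proof -
    define Q where "Q \<delta> \<longleftrightarrow> (\<forall>(n::nat) \<alpha> \<beta>. (\<forall>i<n. \<alpha> i \<in> {a..b} \<and> \<beta> i \<in> {a..b} \<and> \<alpha> i \<le> \<beta> i) \<and>
       (\<forall>i<n. \<forall>j<n. i \<noteq> j \<longrightarrow> \<beta> i \<le> \<alpha> j \<or> \<beta> j \<le> \<alpha> i) \<and>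
       (\<Sum>i<n. \<beta> i - \<alpha> i) < \<delta> \<longrightarrow> (\<Sum>i<n. \<bar>h (\<beta> i) - h (\<alpha> i)\<bar>) < \<epsilon>)" for \<delta>
    have "\<exists>\<delta>>0. Q \<delta>"
      unfolding Q_def by (rule ac[unfolded abs_cont_on_def, THEN spec[of _ \<epsilon>], THEN mp, OF \<epsilon>])
    then obtain \<delta> where \<delta>: "\<delta> > 0" and "Q \<delta>" by blast
    have AC0: "\<forall>(n::nat) \<alpha> \<beta>. (\<forall>i<n. \<alpha> i \<in> {a..b} \<and> \<beta> i \<in> {a..b} \<and> \<alpha> i \<le> \<beta> i) \<and>
       (\<forall>i<n. \<forall>j<n. i \<noteq> j \<longrightarrow> \<beta> i \<le> \<alpha> j \<or> \<beta> j \<le> \<alpha> i) \<and>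
       (\<Sum>i<n. \<beta> i - \<alpha> i) < \<delta> \<longrightarrow> (\<Sum>i<n. \<bar>h (\<beta> i) - h (\<alpha> i)\<bar>) < \<epsilon>"
      using \<open>Q \<delta>\<close> unfolding Q_def .
    note AC = AC0[rule_format]
    define N' where "N' = N \<union> {a, b}"
    have negN': "negligible N'" unfolding N'_def using N by auto
    then have "N' \<in> sets lebesgue" by (simp add: negligible_imp_sets)
    then obtain T where T: "open T" "N' \<subseteq> T" "(T - N') \<in> lmeasurable"
        "emeasure lebesgue (T - N') < ennreal \<delta>"
      using sets_lebesgue_outer_open[of N' \<delta>] \<delta> by blast
    have N'm: "N' \<in> lmeasurable" "measure lebesgue N' = 0" using negN'
      by (auto simp: negligible_imp_measurable negligible_imp_measure0)
    have TU: "T = (T - N') \<union> N'" using T(2) by auto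
    have "(T - N') \<union> N' \<in> lmeasurable" using T(3) N'm(1) by (rule fmeasurable.Un)
    then have Tm: "T \<in> lmeasurable" using TU by simp
    have "measure lebesgue (T - N') < \<delta>"
      using T(3,4) \<delta> by (simp add: emeasure_eq_measure2 ennreal_less_iff)
    have "measure lebesgue T \<le> measure lebesgue (T - N') + measure lebesgue N'"
      using measure_Un_le[of "T - N'" lebesgue N'] T(3) N'm TU by (simp add: fmeasurable_def)
    then have mT: "measure lebesgue T < \<delta>"
      using \<open>measure lebesgue (T - N') < \<delta>\<close> N'm by linarith
    define Fam where "Fam x (n::nat) \<alpha> \<beta> \<longleftrightarrow> ((\<forall>i<n. a \<le> \<alpha> i \<and> \<alpha> i \<le> \<beta> i \<and> \<beta> i \<le> x \<and> {\<alpha> i..\<beta> i} \<subseteq> T) \<and>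
       (\<forall>i<n. \<forall>j<n. i \<noteq> j \<longrightarrow> \<beta> i \<le> \<alpha> j \<or> \<beta> j \<le> \<alpha> i) \<and>
       \<bar>h x - h a\<bar> \<le> \<epsilon> * (x - a) + (\<Sum>i<n. \<bar>h (\<beta> i) - h (\<alpha> i)\<bar>))" for x n \<alpha> \<beta>
    define P where "P x \<longleftrightarrow> (\<exists>n \<alpha> \<beta>. Fam x n \<alpha> \<beta>)" for x
    have Pa: "P a" unfolding P_def Fam_def by (intro exI[of _ 0]) auto
    have step: "P y" if Px: "P x" and xy: "x \<le> y" and ax: "a \<le> x"
      and alt: "{x..y} \<subseteq> T \<or> \<bar>h y - h x\<bar> \<le> \<epsilon> * (y - x)" for x y
    proof -
      from Px obtain n \<alpha> \<beta> where Fx: "Fam x n \<alpha> \<beta>" unfolding P_def by blast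
      note F = Fx[unfolded Fam_def, THEN conjunct1] Fx[unfolded Fam_def, THEN conjunct2, THEN conjunct1]
        Fx[unfolded Fam_def, THEN conjunct2, THEN conjunct2]
      have tri: "\<bar>h y - h a\<bar> \<le> \<bar>h y - h x\<bar> + \<bar>h x - h a\<bar>" by linarith
      have exy: "\<epsilon> * (x - a) \<le> \<epsilon> * (y - a)" using xy \<epsilon> by (intro mult_left_mono) auto
      show ?thesis using alt
      proof
        assume sub: "{x..y} \<subseteq> T"
        define \<alpha>' where "\<alpha>' = \<alpha>(n := x)"
        define \<beta>' where "\<beta>' = \<beta>(n := y)"
        have s1: "(\<Sum>i<Suc n. \<bar>h (\<beta>' i) - h (\<alpha>' i)\<bar>) = (\<Sum>i<n. \<bar>h (\<beta> i) - h (\<alpha> i)\<bar>) + \<bar>h y - h x\<bar>"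
          unfolding \<alpha>'_def \<beta>'_def by (simp add: lessThan_Suc)
        have f1: "\<forall>i<Suc n. a \<le> \<alpha>' i \<and> \<alpha>' i \<le> \<beta>' i \<and> \<beta>' i \<le> y \<and> {\<alpha>' i..\<beta>' i} \<subseteq> T"
        proof (intro allI impI)
          fix i assume "i < Suc n"
          then show "a \<le> \<alpha>' i \<and> \<alpha>' i \<le> \<beta>' i \<and> \<beta>' i \<le> y \<and> {\<alpha>' i..\<beta>' i} \<subseteq> T"
            using F(1) sub xy ax unfolding \<alpha>'_def \<beta>'_def
            by (cases "i = n") (auto simp: less_Suc_eq)
        qed
        have f2: "\<forall>i<Suc n. \<forall>j<Suc n. i \<noteq> j \<longrightarrow> \<beta>' i \<le> \<alpha>' j \<or> \<beta>' j \<le> \<alpha>' i"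
        proof (intro allI impI)
          fix i j assume "i < Suc n" "j < Suc n" "i \<noteq> j"
          then show "\<beta>' i \<le> \<alpha>' j \<or> \<beta>' j \<le> \<alpha>' i"
            using F(1,2) unfolding \<alpha>'_def \<beta>'_def
            by (cases "i = n"; cases "j = n") (auto simp: less_Suc_eq)
        qed
        have f3: "\<bar>h y - h a\<bar> \<le> \<epsilon> * (y - a) + (\<Sum>i<Suc n. \<bar>h (\<beta>' i) - h (\<alpha>' i)\<bar>)"
            using s1 tri F(3) exy by linarith
        have "Fam y (Suc n) \<alpha>' \<beta>'" unfolding Fam_def using f1 f2 f3 by (intro conjI)
        then show "P y" unfolding P_def by blast
      next
        assume hb: "\<bar>h y - h x\<bar> \<le> \<epsilon> * (y - x)"
        have f1: "\<forall>i<n. a \<le> \<alpha> i \<and> \<alpha> i \<le> \<beta> i \<and> \<beta> i \<le> y \<and> {\<alpha> i..\<beta> i} \<subseteq> T"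
          using F(1) xy by force
        have f3: "\<bar>h y - h a\<bar> \<le> \<epsilon> * (y - a) + (\<Sum>i<n. \<bar>h (\<beta> i) - h (\<alpha> i)\<bar>)"
            using hb tri F(3) by (simp add: algebra_simps)
        have "Fam y n \<alpha> \<beta>" unfolding Fam_def using f1 F(2) f3 by (intro conjI)
        then show "P y" unfolding P_def by blast
      qed
    qed
    define S where "S = {x\<in>{a..b}. P x}"
    have aS: "a \<in> S" using Pa ab unfolding S_def by auto
    have bdd: "bdd_above S" unfolding S_def by (auto intro: bdd_aboveI[of _ b])
    define s where "s = Sup S"
    have as: "a \<le> s" unfolding s_def using aS bdd by (rule cSup_upper)
    have sb: "s \<le> b" unfolding s_def using aS by (intro cSup_least) (auto simp: S_def)
    have loc: "\<exists>d>0. \<forall>y. \<bar>y - s\<bar> < d \<longrightarrow> ({min y s..max y s} \<subseteq> T \<or> \<bar>h y - h s\<bar> \<le> \<epsilon> * \<bar>y - s\<bar>)"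
    proof (cases "s \<in> T")
      case True
      then obtain d where d: "d > 0" "ball s d \<subseteq> T" using T(1) open_contains_ball by blast
      show ?thesis
      proof (intro exI[of _ d] conjI allI impI)
        fix y assume "\<bar>y - s\<bar> < d"
        then have "{min y s..max y s} \<subseteq> ball s d" by (auto simp: dist_real_def)
        then show "{min y s..max y s} \<subseteq> T \<or> \<bar>h y - h s\<bar> \<le> \<epsilon> * \<bar>y - s\<bar>" using d by blast
      qed (use d in auto)
    next
      case False
      then have "s \<notin> N'" using T(2) by auto
      then have "s \<in> {a<..<b}" "s \<notin> N" using as sb unfolding N'_def by auto
      from deriv0_eps[OF d0[OF this] \<epsilon>] show ?thesis by blast
    qed
    then obtain d where d: "d > 0"
      "\<And>y. \<bar>y - s\<bar> < d \<Longrightarrow> {min y s..max y s} \<subseteq> T \<or> \<bar>h y - h s\<bar> \<le> \<epsilon> * \<bar>y - s\<bar>" by blast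
    have sS: "s \<in> S"
    proof -
      obtain x where "x \<in> S" "s - d < x"
        using less_cSupD[of S "s - d"] aS d(1) unfolding s_def by auto
      have xs: "x \<le> s" unfolding s_def using \<open>x \<in> S\<close> bdd by (rule cSup_upper)
      have "{min s x..max s x} \<subseteq> T \<or> \<bar>h s - h x\<bar> \<le> \<epsilon> * \<bar>s - x\<bar>"
        using d(2)[of x] \<open>s - d < x\<close> xs by (auto simp: abs_minus_commute min_def max_def)
      then have "{x..s} \<subseteq> T \<or> \<bar>h s - h x\<bar> \<le> \<epsilon> * (s - x)" using xs by (auto simp: min_def max_def)
      moreover have "P x" "a \<le> x" using \<open>x \<in> S\<close> unfolding S_def by auto
      ultimately have "P s" using step xs by blast
      then show ?thesis using as sb unfolding S_def by auto
    qed
    have sb': "s = b"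
    proof (rule ccontr)
      assume "s \<noteq> b"
      then have "s < b" using sb by auto
      define y where "y = min (s + d/2) b"
      have sy: "s < y" "y \<le> b" "\<bar>y - s\<bar> < d" using \<open>s < b\<close> d(1) unfolding y_def by auto
      have "{s..y} \<subseteq> T \<or> \<bar>h y - h s\<bar> \<le> \<epsilon> * (y - s)"
        using d(2)[OF sy(3)] sy by (auto simp: min_def max_def)
      moreover have "P s" using sS unfolding S_def by auto
      ultimately have "P y" using step sy as by auto
      then have "y \<in> S" using sy as unfolding S_def by auto
      then have "y \<le> s" unfolding s_def using bdd by (rule cSup_upper)
      then show False using sy by auto
    qed
    have "P b" using sS sb' unfolding S_def by auto
      from \<open>P b\<close> obtain n \<alpha> \<beta> where Fx: "Fam b n \<alpha> \<beta>" unfolding P_def by blast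
      note F = Fx[unfolded Fam_def, THEN conjunct1] Fx[unfolded Fam_def, THEN conjunct2, THEN conjunct1]
        Fx[unfolded Fam_def, THEN conjunct2, THEN conjunct2]
    have "(\<Sum>i<n. \<beta> i - \<alpha> i) \<le> measure lebesgue T"
      by (rule sum_intervals_le_measure[OF Tm]) (use F in auto)
    then have "(\<Sum>i<n. \<bar>h (\<beta> i) - h (\<alpha> i)\<bar>) < \<epsilon>"
      using mT F(1,2) by (intro AC) auto
    then show ?thesis using F(3) by linarith
  qed
  show ?thesis
  proof (rule ccontr)
    assume "h b \<noteq> h a"
    define \<epsilon> where "\<epsilon> = \<bar>h b - h a\<bar> / (2 * (b - a + 1))"
    have pos: "\<epsilon> > 0" using \<open>h b \<noteq> h a\<close> ab unfolding \<epsilon>_def by auto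
    have "\<epsilon> * (b - a) + \<epsilon> = \<epsilon> * (b - a + 1)" by (simp add: algebra_simps)
    also have "\<dots> = \<bar>h b - h a\<bar> / 2" unfolding \<epsilon>_def using ab
      by (simp add: divide_simps)
    finally have "\<epsilon> * (b - a) + \<epsilon> = \<bar>h b - h a\<bar> / 2" .
    then show False using key[OF pos] \<open>h b \<noteq> h a\<close> by auto
  qed
qed

lemma acD:
  fixes f :: "real \<Rightarrow> real"
  assumes "abs_cont_on S f" "\<epsilon> > 0"
  obtains \<delta> where "\<delta> > 0" "\<And>(n::nat) \<alpha> \<beta>. (\<forall>i<n. \<alpha> i \<in> S \<and> \<beta> i \<in> S \<and> \<alpha> i \<le> \<beta> i) \<Longrightarrow>
       (\<forall>i<n. \<forall>j<n. i \<noteq> j \<longrightarrow> \<beta> i \<le> \<alpha> j \<or> \<beta> j \<le> \<alpha> i) \<Longrightarrow>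
       (\<Sum>i<n. \<beta> i - \<alpha> i) < \<delta> \<Longrightarrow> (\<Sum>i<n. \<bar>f (\<beta> i) - f (\<alpha> i)\<bar>) < \<epsilon>"
proof -
  have "\<exists>\<delta>>0. \<forall>(n::nat) \<alpha> \<beta>. (\<forall>i<n. \<alpha> i \<in> S \<and> \<beta> i \<in> S \<and> \<alpha> i \<le> \<beta> i) \<and>
       (\<forall>i<n. \<forall>j<n. i \<noteq> j \<longrightarrow> \<beta> i \<le> \<alpha> j \<or> \<beta> j \<le> \<alpha> i) \<and>
       (\<Sum>i<n. \<beta> i - \<alpha> i) < \<delta> \<longrightarrow> (\<Sum>i<n. \<bar>f (\<beta> i) - f (\<alpha> i)\<bar>) < \<epsilon>"
    by (rule assms(1)[unfolded abs_cont_on_def, THEN spec[of _ \<epsilon>], THEN mp, OF assms(2)])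
  then obtain \<delta> where d: "\<delta> > 0" and H: "\<forall>(n::nat) \<alpha> \<beta>. (\<forall>i<n. \<alpha> i \<in> S \<and> \<beta> i \<in> S \<and> \<alpha> i \<le> \<beta> i) \<and>
       (\<forall>i<n. \<forall>j<n. i \<noteq> j \<longrightarrow> \<beta> i \<le> \<alpha> j \<or> \<beta> j \<le> \<alpha> i) \<and>
       (\<Sum>i<n. \<beta> i - \<alpha> i) < \<delta> \<longrightarrow> (\<Sum>i<n. \<bar>f (\<beta> i) - f (\<alpha> i)\<bar>) < \<epsilon>"
    by (elim exE conjE)
  show ?thesis
    by (rule that[OF d]) (use H in blast)
qed

lemma acI:
  fixes f :: "real \<Rightarrow> real"
  assumes "\<And>\<epsilon>. \<epsilon> > 0 \<Longrightarrow> \<exists>\<delta>>0. \<forall>(n::nat) \<alpha> \<beta>. (\<forall>i<n. \<alpha> i \<in> S \<and> \<beta> i \<in> S \<and> \<alpha> i \<le> \<beta> i) \<and>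
       (\<forall>i<n. \<forall>j<n. i \<noteq> j \<longrightarrow> \<beta> i \<le> \<alpha> j \<or> \<beta> j \<le> \<alpha> i) \<and>
       (\<Sum>i<n. \<beta> i - \<alpha> i) < \<delta> \<longrightarrow> (\<Sum>i<n. \<bar>f (\<beta> i) - f (\<alpha> i)\<bar>) < \<epsilon>"
  shows "abs_cont_on S f"
  unfolding abs_cont_on_def using assms by blast

lemma ac_lipschitz:
  fixes f :: "real \<Rightarrow> real"
  assumes L: "\<And>u v. u \<in> S \<Longrightarrow> v \<in> S \<Longrightarrow> \<bar>f u - f v\<bar> \<le> K * \<bar>u - v\<bar>"
  shows "abs_cont_on S f"
proof (rule acI)
  fix \<epsilon> :: real assume e: "\<epsilon> > 0"
  define K' where "K' = \<bar>K\<bar> + 1"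
  have K': "K' > 0" unfolding K'_def by auto
  show "\<exists>\<delta>>0. \<forall>(n::nat) \<alpha> \<beta>. (\<forall>i<n. \<alpha> i \<in> S \<and> \<beta> i \<in> S \<and> \<alpha> i \<le> \<beta> i) \<and>
       (\<forall>i<n. \<forall>j<n. i \<noteq> j \<longrightarrow> \<beta> i \<le> \<alpha> j \<or> \<beta> j \<le> \<alpha> i) \<and>
       (\<Sum>i<n. \<beta> i - \<alpha> i) < \<delta> \<longrightarrow> (\<Sum>i<n. \<bar>f (\<beta> i) - f (\<alpha> i)\<bar>) < \<epsilon>"
  proof (intro exI[of _ "\<epsilon> / K'"] conjI allI impI)
    show "\<epsilon> / K' > 0" using e K' by auto
    fix n :: nat and \<alpha> \<beta> :: "nat \<Rightarrow> real"
    assume H: "(\<forall>i<n. \<alpha> i \<in> S \<and> \<beta> i \<in> S \<and> \<alpha> i \<le> \<beta> i) \<and>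
       (\<forall>i<n. \<forall>j<n. i \<noteq> j \<longrightarrow> \<beta> i \<le> \<alpha> j \<or> \<beta> j \<le> \<alpha> i) \<and>
       (\<Sum>i<n. \<beta> i - \<alpha> i) < \<epsilon> / K'"
    have "(\<Sum>i<n. \<bar>f (\<beta> i) - f (\<alpha> i)\<bar>) \<le> (\<Sum>i<n. K' * (\<beta> i - \<alpha> i))"
    proof (rule sum_mono)
      fix i assume "i \<in> {..<n}"
      then have i: "\<alpha> i \<in> S" "\<beta> i \<in> S" "\<alpha> i \<le> \<beta> i" using H by auto
      have "\<bar>f (\<beta> i) - f (\<alpha> i)\<bar> \<le> K * \<bar>\<beta> i - \<alpha> i\<bar>" using L[OF i(2) i(1)] by simp
      also have "\<dots> \<le> K' * \<bar>\<beta> i - \<alpha> i\<bar>" unfolding K'_def by (intro mult_right_mono) auto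
      finally show "\<bar>f (\<beta> i) - f (\<alpha> i)\<bar> \<le> K' * (\<beta> i - \<alpha> i)" using i by simp
    qed
    also have "\<dots> = K' * (\<Sum>i<n. \<beta> i - \<alpha> i)" by (simp add: sum_distrib_left)
    also have "\<dots> < K' * (\<epsilon> / K')" using H K' by (intro mult_strict_left_mono) auto
    also have "\<dots> = \<epsilon>" using K' by simp
    finally show "(\<Sum>i<n. \<bar>f (\<beta> i) - f (\<alpha> i)\<bar>) < \<epsilon>" .
  qed
qed

lemma ac_add:
  fixes f g :: "real \<Rightarrow> real"
  assumes f: "abs_cont_on S f" and g: "abs_cont_on S g"
  shows "abs_cont_on S (\<lambda>x. f x + g x)"
proof (rule acI)
  fix \<epsilon> :: real assume e: "\<epsilon> > 0"
  have e2: "\<epsilon>/2 > 0" using e by simp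
  obtain d1 where d1: "d1 > 0" and D1: "\<And>(n::nat) \<alpha> \<beta>. (\<forall>i<n. \<alpha> i \<in> S \<and> \<beta> i \<in> S \<and> \<alpha> i \<le> \<beta> i) \<Longrightarrow>
       (\<forall>i<n. \<forall>j<n. i \<noteq> j \<longrightarrow> \<beta> i \<le> \<alpha> j \<or> \<beta> j \<le> \<alpha> i) \<Longrightarrow>
       (\<Sum>i<n. \<beta> i - \<alpha> i) < d1 \<Longrightarrow> (\<Sum>i<n. \<bar>f (\<beta> i) - f (\<alpha> i)\<bar>) < \<epsilon>/2"
    by (rule acD[OF f e2]) blast
  obtain d2 where d2: "d2 > 0" and D2: "\<And>(n::nat) \<alpha> \<beta>. (\<forall>i<n. \<alpha> i \<in> S \<and> \<beta> i \<in> S \<and> \<alpha> i \<le> \<beta> i) \<Longrightarrow>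
       (\<forall>i<n. \<forall>j<n. i \<noteq> j \<longrightarrow> \<beta> i \<le> \<alpha> j \<or> \<beta> j \<le> \<alpha> i) \<Longrightarrow>
       (\<Sum>i<n. \<beta> i - \<alpha> i) < d2 \<Longrightarrow> (\<Sum>i<n. \<bar>g (\<beta> i) - g (\<alpha> i)\<bar>) < \<epsilon>/2"
    by (rule acD[OF g e2]) blast
  show "\<exists>\<delta>>0. \<forall>(n::nat) \<alpha> \<beta>. (\<forall>i<n. \<alpha> i \<in> S \<and> \<beta> i \<in> S \<and> \<alpha> i \<le> \<beta> i) \<and>
       (\<forall>i<n. \<forall>j<n. i \<noteq> j \<longrightarrow> \<beta> i \<le> \<alpha> j \<or> \<beta> j \<le> \<alpha> i) \<and>
       (\<Sum>i<n. \<beta> i - \<alpha> i) < \<delta> \<longrightarrow> (\<Sum>i<n. \<bar>(f (\<beta> i) + g (\<beta> i)) - (f (\<alpha> i) + g (\<alpha> i))\<bar>) < \<epsilon>"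
  proof (intro exI[of _ "min d1 d2"] conjI allI impI)
    show "min d1 d2 > 0" using d1 d2 by auto
    fix n :: nat and \<alpha> \<beta> :: "nat \<Rightarrow> real"
    assume H: "(\<forall>i<n. \<alpha> i \<in> S \<and> \<beta> i \<in> S \<and> \<alpha> i \<le> \<beta> i) \<and>
       (\<forall>i<n. \<forall>j<n. i \<noteq> j \<longrightarrow> \<beta> i \<le> \<alpha> j \<or> \<beta> j \<le> \<alpha> i) \<and>
       (\<Sum>i<n. \<beta> i - \<alpha> i) < min d1 d2"
    have "(\<Sum>i<n. \<bar>(f (\<beta> i) + g (\<beta> i)) - (f (\<alpha> i) + g (\<alpha> i))\<bar>)
        \<le> (\<Sum>i<n. \<bar>f (\<beta> i) - f (\<alpha> i)\<bar> + \<bar>g (\<beta> i) - g (\<alpha> i)\<bar>)"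
      by (intro sum_mono) auto
    also have "\<dots> = (\<Sum>i<n. \<bar>f (\<beta> i) - f (\<alpha> i)\<bar>) + (\<Sum>i<n. \<bar>g (\<beta> i) - g (\<alpha> i)\<bar>)"
      by (simp add: sum.distrib)
    also have "\<dots> < \<epsilon>/2 + \<epsilon>/2"
      using D1[of n \<alpha> \<beta>] D2[of n \<alpha> \<beta>] H by (intro add_strict_mono) auto
    finally show "(\<Sum>i<n. \<bar>(f (\<beta> i) + g (\<beta> i)) - (f (\<alpha> i) + g (\<alpha> i))\<bar>) < \<epsilon>" by simp
  qed
qed

lemma ac_mult:
  fixes f g :: "real \<Rightarrow> real"
  assumes f: "abs_cont_on S f" and g: "abs_cont_on S g"
    and bf: "\<And>x. x \<in> S \<Longrightarrow> \<bar>f x\<bar> \<le> B" and bg: "\<And>x. x \<in> S \<Longrightarrow> \<bar>g x\<bar> \<le> B"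
  shows "abs_cont_on S (\<lambda>x. f x * g x)"
proof (rule acI)
  fix \<epsilon> :: real assume e: "\<epsilon> > 0"
  define B' where "B' = \<bar>B\<bar> + 1"
  have B': "B' > 0" unfolding B'_def by auto
  have e2: "\<epsilon> / (2 * B') > 0" using e B' by auto
  obtain d1 where d1: "d1 > 0" and D1: "\<And>(n::nat) \<alpha> \<beta>. (\<forall>i<n. \<alpha> i \<in> S \<and> \<beta> i \<in> S \<and> \<alpha> i \<le> \<beta> i) \<Longrightarrow>
       (\<forall>i<n. \<forall>j<n. i \<noteq> j \<longrightarrow> \<beta> i \<le> \<alpha> j \<or> \<beta> j \<le> \<alpha> i) \<Longrightarrow>
       (\<Sum>i<n. \<beta> i - \<alpha> i) < d1 \<Longrightarrow> (\<Sum>i<n. \<bar>f (\<beta> i) - f (\<alpha> i)\<bar>) < \<epsilon>/(2*B')"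
    by (rule acD[OF f e2]) blast
  obtain d2 where d2: "d2 > 0" and D2: "\<And>(n::nat) \<alpha> \<beta>. (\<forall>i<n. \<alpha> i \<in> S \<and> \<beta> i \<in> S \<and> \<alpha> i \<le> \<beta> i) \<Longrightarrow>
       (\<forall>i<n. \<forall>j<n. i \<noteq> j \<longrightarrow> \<beta> i \<le> \<alpha> j \<or> \<beta> j \<le> \<alpha> i) \<Longrightarrow>
       (\<Sum>i<n. \<beta> i - \<alpha> i) < d2 \<Longrightarrow> (\<Sum>i<n. \<bar>g (\<beta> i) - g (\<alpha> i)\<bar>) < \<epsilon>/(2*B')"
    by (rule acD[OF g e2]) blast
  show "\<exists>\<delta>>0. \<forall>(n::nat) \<alpha> \<beta>. (\<forall>i<n. \<alpha> i \<in> S \<and> \<beta> i \<in> S \<and> \<alpha> i \<le> \<beta> i) \<and>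
       (\<forall>i<n. \<forall>j<n. i \<noteq> j \<longrightarrow> \<beta> i \<le> \<alpha> j \<or> \<beta> j \<le> \<alpha> i) \<and>
       (\<Sum>i<n. \<beta> i - \<alpha> i) < \<delta> \<longrightarrow> (\<Sum>i<n. \<bar>f (\<beta> i) * g (\<beta> i) - f (\<alpha> i) * g (\<alpha> i)\<bar>) < \<epsilon>"
  proof (intro exI[of _ "min d1 d2"] conjI allI impI)
    show "min d1 d2 > 0" using d1 d2 by auto
    fix n :: nat and \<alpha> \<beta> :: "nat \<Rightarrow> real"
    assume H: "(\<forall>i<n. \<alpha> i \<in> S \<and> \<beta> i \<in> S \<and> \<alpha> i \<le> \<beta> i) \<and>
       (\<forall>i<n. \<forall>j<n. i \<noteq> j \<longrightarrow> \<beta> i \<le> \<alpha> j \<or> \<beta> j \<le> \<alpha> i) \<and>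
       (\<Sum>i<n. \<beta> i - \<alpha> i) < min d1 d2"
    have "(\<Sum>i<n. \<bar>f (\<beta> i) * g (\<beta> i) - f (\<alpha> i) * g (\<alpha> i)\<bar>)
        \<le> (\<Sum>i<n. B' * \<bar>f (\<beta> i) - f (\<alpha> i)\<bar> + B' * \<bar>g (\<beta> i) - g (\<alpha> i)\<bar>)"
    proof (rule sum_mono)
      fix i assume "i \<in> {..<n}"
      then have i: "\<alpha> i \<in> S" "\<beta> i \<in> S" using H by auto
      have eq: "f (\<beta> i) * g (\<beta> i) - f (\<alpha> i) * g (\<alpha> i)
          = g (\<beta> i) * (f (\<beta> i) - f (\<alpha> i)) + f (\<alpha> i) * (g (\<beta> i) - g (\<alpha> i))"
        by (simp add: algebra_simps)
      have "\<bar>g (\<beta> i) * (f (\<beta> i) - f (\<alpha> i))\<bar> \<le> B' * \<bar>f (\<beta> i) - f (\<alpha> i)\<bar>"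
        unfolding abs_mult using bg[OF i(2)] unfolding B'_def by (intro mult_right_mono) auto
      moreover have "\<bar>f (\<alpha> i) * (g (\<beta> i) - g (\<alpha> i))\<bar> \<le> B' * \<bar>g (\<beta> i) - g (\<alpha> i)\<bar>"
        unfolding abs_mult using bf[OF i(1)] unfolding B'_def by (intro mult_right_mono) auto
      ultimately show "\<bar>f (\<beta> i) * g (\<beta> i) - f (\<alpha> i) * g (\<alpha> i)\<bar>
          \<le> B' * \<bar>f (\<beta> i) - f (\<alpha> i)\<bar> + B' * \<bar>g (\<beta> i) - g (\<alpha> i)\<bar>"
        unfolding eq by linarith
    qed
    also have "\<dots> = B' * (\<Sum>i<n. \<bar>f (\<beta> i) - f (\<alpha> i)\<bar>) + B' * (\<Sum>i<n. \<bar>g (\<beta> i) - g (\<alpha> i)\<bar>)"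
      by (simp add: sum.distrib sum_distrib_left)
    also have "\<dots> < B' * (\<epsilon>/(2*B')) + B' * (\<epsilon>/(2*B'))"
      using D1[of n \<alpha> \<beta>] D2[of n \<alpha> \<beta>] H B' by (intro add_strict_mono mult_strict_left_mono) auto
    also have "\<dots> = \<epsilon>" using B' by (simp add: field_simps)
    finally show "(\<Sum>i<n. \<bar>f (\<beta> i) * g (\<beta> i) - f (\<alpha> i) * g (\<alpha> i)\<bar>) < \<epsilon>" .
  qed
qed

lemma ac_const: "abs_cont_on S (\<lambda>x. c)"
  by (rule ac_lipschitz[of S _ 0]) auto

lemma ac_cmult:
  fixes f :: "real \<Rightarrow> real"
  assumes f: "abs_cont_on S f" "bounded (f ` S)"
  shows "abs_cont_on S (\<lambda>x. c * f x)"
proof -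
  obtain B where B: "\<And>x. x \<in> S \<Longrightarrow> \<bar>f x\<bar> \<le> B" using f(2) unfolding bounded_iff by auto
  show ?thesis
    using ac_mult[OF ac_const[of S c] f(1), where B="max B \<bar>c\<bar>"] B by (force simp: le_max_iff_disj)
qed

lemma ac_subset:
  fixes f :: "real \<Rightarrow> real"
  assumes "abs_cont_on S f" "T \<subseteq> S"
  shows "abs_cont_on T f"
proof (rule acI)
  fix \<epsilon> :: real assume e: "\<epsilon> > 0"
  obtain d1 where d1: "d1 > 0" and D1: "\<And>(n::nat) \<alpha> \<beta>. (\<forall>i<n. \<alpha> i \<in> S \<and> \<beta> i \<in> S \<and> \<alpha> i \<le> \<beta> i) \<Longrightarrow>
       (\<forall>i<n. \<forall>j<n. i \<noteq> j \<longrightarrow> \<beta> i \<le> \<alpha> j \<or> \<beta> j \<le> \<alpha> i) \<Longrightarrow>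
       (\<Sum>i<n. \<beta> i - \<alpha> i) < d1 \<Longrightarrow> (\<Sum>i<n. \<bar>f (\<beta> i) - f (\<alpha> i)\<bar>) < \<epsilon>"
    by (rule acD[OF assms(1) e]) blast
  show "\<exists>\<delta>>0. \<forall>(n::nat) \<alpha> \<beta>. (\<forall>i<n. \<alpha> i \<in> T \<and> \<beta> i \<in> T \<and> \<alpha> i \<le> \<beta> i) \<and>
       (\<forall>i<n. \<forall>j<n. i \<noteq> j \<longrightarrow> \<beta> i \<le> \<alpha> j \<or> \<beta> j \<le> \<alpha> i) \<and>
       (\<Sum>i<n. \<beta> i - \<alpha> i) < \<delta> \<longrightarrow> (\<Sum>i<n. \<bar>f (\<beta> i) - f (\<alpha> i)\<bar>) < \<epsilon>"
  proof (intro exI[of _ d1] conjI allI impI)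
    fix n :: nat and \<alpha> \<beta> :: "nat \<Rightarrow> real"
    assume H: "(\<forall>i<n. \<alpha> i \<in> T \<and> \<beta> i \<in> T \<and> \<alpha> i \<le> \<beta> i) \<and>
       (\<forall>i<n. \<forall>j<n. i \<noteq> j \<longrightarrow> \<beta> i \<le> \<alpha> j \<or> \<beta> j \<le> \<alpha> i) \<and>
       (\<Sum>i<n. \<beta> i - \<alpha> i) < d1"
    have "\<forall>i<n. \<alpha> i \<in> S \<and> \<beta> i \<in> S \<and> \<alpha> i \<le> \<beta> i" using H assms(2) by blast
    then show "(\<Sum>i<n. \<bar>f (\<beta> i) - f (\<alpha> i)\<bar>) < \<epsilon>" using H by (intro D1) auto
  qed (rule d1)
qed

lemma ac_diff:
  fixes f g :: "real \<Rightarrow> real"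
  assumes f: "abs_cont_on S f" and g: "abs_cont_on S g"
  shows "abs_cont_on S (\<lambda>x. f x - g x)"
proof (rule acI)
  fix \<epsilon> :: real assume e: "\<epsilon> > 0"
  have e2: "\<epsilon>/2 > 0" using e by simp
  obtain d1 where d1: "d1 > 0" and D1: "\<And>(n::nat) \<alpha> \<beta>. (\<forall>i<n. \<alpha> i \<in> S \<and> \<beta> i \<in> S \<and> \<alpha> i \<le> \<beta> i) \<Longrightarrow>
       (\<forall>i<n. \<forall>j<n. i \<noteq> j \<longrightarrow> \<beta> i \<le> \<alpha> j \<or> \<beta> j \<le> \<alpha> i) \<Longrightarrow>
       (\<Sum>i<n. \<beta> i - \<alpha> i) < d1 \<Longrightarrow> (\<Sum>i<n. \<bar>f (\<beta> i) - f (\<alpha> i)\<bar>) < \<epsilon>/2"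
    by (rule acD[OF f e2]) blast
  obtain d2 where d2: "d2 > 0" and D2: "\<And>(n::nat) \<alpha> \<beta>. (\<forall>i<n. \<alpha> i \<in> S \<and> \<beta> i \<in> S \<and> \<alpha> i \<le> \<beta> i) \<Longrightarrow>
       (\<forall>i<n. \<forall>j<n. i \<noteq> j \<longrightarrow> \<beta> i \<le> \<alpha> j \<or> \<beta> j \<le> \<alpha> i) \<Longrightarrow>
       (\<Sum>i<n. \<beta> i - \<alpha> i) < d2 \<Longrightarrow> (\<Sum>i<n. \<bar>g (\<beta> i) - g (\<alpha> i)\<bar>) < \<epsilon>/2"
    by (rule acD[OF g e2]) blast
  show "\<exists>\<delta>>0. \<forall>(n::nat) \<alpha> \<beta>. (\<forall>i<n. \<alpha> i \<in> S \<and> \<beta> i \<in> S \<and> \<alpha> i \<le> \<beta> i) \<and>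
       (\<forall>i<n. \<forall>j<n. i \<noteq> j \<longrightarrow> \<beta> i \<le> \<alpha> j \<or> \<beta> j \<le> \<alpha> i) \<and>
       (\<Sum>i<n. \<beta> i - \<alpha> i) < \<delta> \<longrightarrow> (\<Sum>i<n. \<bar>(f (\<beta> i) - g (\<beta> i)) - (f (\<alpha> i) - g (\<alpha> i))\<bar>) < \<epsilon>"
  proof (intro exI[of _ "min d1 d2"] conjI allI impI)
    show "min d1 d2 > 0" using d1 d2 by auto
    fix n :: nat and \<alpha> \<beta> :: "nat \<Rightarrow> real"
    assume H: "(\<forall>i<n. \<alpha> i \<in> S \<and> \<beta> i \<in> S \<and> \<alpha> i \<le> \<beta> i) \<and>
       (\<forall>i<n. \<forall>j<n. i \<noteq> j \<longrightarrow> \<beta> i \<le> \<alpha> j \<or> \<beta> j \<le> \<alpha> i) \<and>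
       (\<Sum>i<n. \<beta> i - \<alpha> i) < min d1 d2"
    have "(\<Sum>i<n. \<bar>(f (\<beta> i) - g (\<beta> i)) - (f (\<alpha> i) - g (\<alpha> i))\<bar>)
        \<le> (\<Sum>i<n. \<bar>f (\<beta> i) - f (\<alpha> i)\<bar> + \<bar>g (\<beta> i) - g (\<alpha> i)\<bar>)"
      by (intro sum_mono) auto
    also have "\<dots> = (\<Sum>i<n. \<bar>f (\<beta> i) - f (\<alpha> i)\<bar>) + (\<Sum>i<n. \<bar>g (\<beta> i) - g (\<alpha> i)\<bar>)"
      by (simp add: sum.distrib)
    also have "\<dots> < \<epsilon>/2 + \<epsilon>/2"
      using D1[of n \<alpha> \<beta>] D2[of n \<alpha> \<beta>] H by (intro add_strict_mono) auto
    finally show "(\<Sum>i<n. \<bar>(f (\<beta> i) - g (\<beta> i)) - (f (\<alpha> i) - g (\<alpha> i))\<bar>) < \<epsilon>" by simp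
  qed
qed

lemma sum_integrals_le:
  fixes g :: "real \<Rightarrow> real" and \<alpha> \<beta> :: "nat \<Rightarrow> real"
  assumes g: "g integrable_on {a..b}" and gnn: "\<And>x. x \<in> {a..b} \<Longrightarrow> 0 \<le> g x"
    and sub: "\<And>i. i < n \<Longrightarrow> a \<le> \<alpha> i \<and> \<alpha> i \<le> \<beta> i \<and> \<beta> i \<le> b"
    and disj: "\<And>i j. i < n \<Longrightarrow> j < n \<Longrightarrow> i \<noteq> j \<Longrightarrow> \<beta> i \<le> \<alpha> j \<or> \<beta> j \<le> \<alpha> i"
  shows "(\<Sum>i<n. integral {\<alpha> i..\<beta> i} g) \<le> integral {a..b} g"
proof -
  have gi: "g integrable_on {\<alpha> i..\<beta> i}" if "i < n" for i
    using sub[OF that] by (intro integrable_subinterval_real[OF g]) auto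
  have U: "(g has_integral (\<Sum>i<n. integral {\<alpha> i..\<beta> i} g)) (\<Union>i\<in>{..<n}. {\<alpha> i..\<beta> i})"
  proof (rule has_integral_UN)
    show "pairwise (\<lambda>i i'. negligible ({\<alpha> i..\<beta> i} \<inter> {\<alpha> i'..\<beta> i'})) {..<n}"
      unfolding pairwise_def
    proof (intro ballI impI)
      fix i j assume ij: "i \<in> {..<n}" "j \<in> {..<n}" "i \<noteq> j"
      then have "\<beta> i \<le> \<alpha> j \<or> \<beta> j \<le> \<alpha> i" using disj by auto
      then have "{\<alpha> i..\<beta> i} \<inter> {\<alpha> j..\<beta> j} \<subseteq> {\<beta> i, \<beta> j}" by auto
      then show "negligible ({\<alpha> i..\<beta> i} \<inter> {\<alpha> j..\<beta> j})"
        by (rule negligible_subset[rotated]) auto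
    qed
  qed (use gi in auto)
  have "(\<Union>i\<in>{..<n}. {\<alpha> i..\<beta> i}) \<subseteq> {a..b}" using sub by fastforce
  then have "integral (\<Union>i\<in>{..<n}. {\<alpha> i..\<beta> i}) g \<le> integral {a..b} g"
    using U g gnn by (intro integral_subset_le) auto
  then show ?thesis using U by (simp add: integral_unique)
qed

lemma ac_integral:
  fixes f :: "real \<Rightarrow> real"
  assumes f: "f absolutely_integrable_on {a..b}"
  shows "abs_cont_on {a..b} (\<lambda>x. integral {a..x} f)"
proof (rule acI)
  fix \<epsilon> :: real assume e: "\<epsilon> > 0"
  have fi: "f integrable_on {a..b}" and afi: "(\<lambda>x. \<bar>f x\<bar>) integrable_on {a..b}"
    using f unfolding absolutely_integrable_on_def by auto
  have abf: "(\<lambda>x. \<bar>f x\<bar>) absolutely_integrable_on {a..b}"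
    using afi by (intro absolutely_integrable_integrable_bound[where g="\<lambda>x. \<bar>f x\<bar>"]) auto
  define t where "t K = (\<lambda>x. \<bar>f x\<bar> - min \<bar>f x\<bar> K)" for K :: real
  have mi: "(\<lambda>x. min \<bar>f x\<bar> K) absolutely_integrable_on {a..b}" for K
    using absolutely_integrable_min_1[OF abf, of "\<lambda>x. K"] by simp
  have ti: "t K integrable_on {a..b}" for K
    unfolding t_def by (rule set_lebesgue_integral_eq_integral(1)[OF set_integral_diff(1)[OF abf mi[of K]]])
  have mii: "(\<lambda>x. min \<bar>f x\<bar> K) integrable_on {a..b}" for K
    by (rule set_lebesgue_integral_eq_integral(1)[OF mi[of K]])
  have lim: "(\<lambda>k. integral {a..b} (t (real k))) \<longlonglongrightarrow> integral {a..b} (\<lambda>x. 0)"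
  proof (rule dominated_convergence(2)[OF ti afi])
    fix k :: nat and x assume "x \<in> {a..b}"
    have "0 \<le> min \<bar>f x\<bar> (real k)" by simp
    then show "norm (t (real k) x) \<le> \<bar>f x\<bar>" unfolding t_def by (simp add: abs_if min_def)
  next
    fix x
    obtain k0 :: nat where "\<bar>f x\<bar> \<le> real k0" using real_arch_simple by blast
    then have "\<forall>k\<ge>k0. t (real k) x = 0" unfolding t_def by auto
    then show "(\<lambda>k. t (real k) x) \<longlonglongrightarrow> 0"
      by (intro tendsto_eventually) (auto simp: eventually_sequentially)
  qed
  then have "(\<lambda>k. integral {a..b} (t (real k))) \<longlonglongrightarrow> 0" by simp
  then obtain k where k: "\<bar>integral {a..b} (t (real k))\<bar> < \<epsilon>/2"
    using e by (auto dest!: LIMSEQ_D[of _ 0 "\<epsilon>/2"])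
  define K where "K = real k + 1"
  have K: "K > 0" unfolding K_def by simp
  have tK: "integral {a..b} (t K) \<le> integral {a..b} (t (real k))"
    using ti by (intro integral_le) (auto simp: t_def K_def)
  show "\<exists>\<delta>>0. \<forall>(n::nat) \<alpha> \<beta>. (\<forall>i<n. \<alpha> i \<in> {a..b} \<and> \<beta> i \<in> {a..b} \<and> \<alpha> i \<le> \<beta> i) \<and>
       (\<forall>i<n. \<forall>j<n. i \<noteq> j \<longrightarrow> \<beta> i \<le> \<alpha> j \<or> \<beta> j \<le> \<alpha> i) \<and>
       (\<Sum>i<n. \<beta> i - \<alpha> i) < \<delta> \<longrightarrow> (\<Sum>i<n. \<bar>integral {a..\<beta> i} f - integral {a..\<alpha> i} f\<bar>) < \<epsilon>"
  proof (intro exI[of _ "\<epsilon> / (2 * K)"] conjI allI impI)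
    show "\<epsilon> / (2 * K) > 0" using e K by auto
    fix n :: nat and \<alpha> \<beta> :: "nat \<Rightarrow> real"
    assume H: "(\<forall>i<n. \<alpha> i \<in> {a..b} \<and> \<beta> i \<in> {a..b} \<and> \<alpha> i \<le> \<beta> i) \<and>
       (\<forall>i<n. \<forall>j<n. i \<noteq> j \<longrightarrow> \<beta> i \<le> \<alpha> j \<or> \<beta> j \<le> \<alpha> i) \<and>
       (\<Sum>i<n. \<beta> i - \<alpha> i) < \<epsilon> / (2 * K)"
    have each: "\<bar>integral {a..\<beta> i} f - integral {a..\<alpha> i} f\<bar> \<le> K * (\<beta> i - \<alpha> i) + integral {\<alpha> i..\<beta> i} (t K)"
      if i: "i < n" for i
    proof -
      have ab: "a \<le> \<alpha> i" "\<alpha> i \<le> \<beta> i" "\<beta> i \<le> b" using H i by auto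
      have sub: "{\<alpha> i..\<beta> i} \<subseteq> {a..b}" using ab by auto
      have "integral {a..\<alpha> i} f + integral {\<alpha> i..\<beta> i} f = integral {a..\<beta> i} f"
        using Henstock_Kurzweil_Integration.integral_combine[OF ab(1) ab(2) integrable_subinterval_real[OF fi, of a "\<beta> i"]] ab by auto
      then have "\<bar>integral {a..\<beta> i} f - integral {a..\<alpha> i} f\<bar> = \<bar>integral {\<alpha> i..\<beta> i} f\<bar>" by simp
      also have "\<dots> \<le> integral {\<alpha> i..\<beta> i} (\<lambda>x. min \<bar>f x\<bar> K + t K x)"
      proof -
        have le: "\<And>x. x \<in> {\<alpha> i..\<beta> i} \<Longrightarrow> norm (f x) \<le> min \<bar>f x\<bar> K + t K x"
          by (simp add: t_def)
        have int2: "(\<lambda>x. min \<bar>f x\<bar> K + t K x) integrable_on {\<alpha> i..\<beta> i}"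
          by (intro integrable_add integrable_subinterval_real[OF mii sub] integrable_subinterval_real[OF ti sub])
        show ?thesis using integral_norm_bound_integral[OF integrable_subinterval_real[OF fi sub] int2 le]
          by simp
      qed
      also have "\<dots> = integral {\<alpha> i..\<beta> i} (\<lambda>x. min \<bar>f x\<bar> K) + integral {\<alpha> i..\<beta> i} (t K)"
        using integrable_subinterval_real[OF mii sub] integrable_subinterval_real[OF ti sub]
        by (rule integral_add)
      also have "integral {\<alpha> i..\<beta> i} (\<lambda>x. min \<bar>f x\<bar> K) \<le> integral {\<alpha> i..\<beta> i} (\<lambda>x. K)"
        using integrable_subinterval_real[OF mii sub] by (intro integral_le) auto
      also have "integral {\<alpha> i..\<beta> i} (\<lambda>x. K) = K * (\<beta> i - \<alpha> i)" using ab by simp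
      finally show ?thesis by simp
    qed
    have "(\<Sum>i<n. \<bar>integral {a..\<beta> i} f - integral {a..\<alpha> i} f\<bar>)
        \<le> (\<Sum>i<n. K * (\<beta> i - \<alpha> i) + integral {\<alpha> i..\<beta> i} (t K))"
      using each by (intro sum_mono) auto
    also have "\<dots> = K * (\<Sum>i<n. \<beta> i - \<alpha> i) + (\<Sum>i<n. integral {\<alpha> i..\<beta> i} (t K))"
      by (simp add: sum.distrib sum_distrib_left)
    also have "(\<Sum>i<n. integral {\<alpha> i..\<beta> i} (t K)) \<le> integral {a..b} (t K)"
      using H by (intro sum_integrals_le ti) (auto simp: t_def)
    also have "K * (\<Sum>i<n. \<beta> i - \<alpha> i) \<le> K * (\<epsilon> / (2 * K))"
      using H K by (intro mult_left_mono) auto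
    also have "K * (\<epsilon> / (2 * K)) = \<epsilon> / 2" using K by simp
    finally show "(\<Sum>i<n. \<bar>integral {a..\<beta> i} f - integral {a..\<alpha> i} f\<bar>) < \<epsilon>"
      using tK k by linarith
  qed
qed

lemma ac_ae_deriv:
  fixes h g :: "real \<Rightarrow> real"
  assumes ab: "a \<le> b" and ac: "abs_cont_on {a..b} h" and g: "continuous_on {a..b} g"
    and N: "negligible N"
    and d: "\<And>x. x \<in> {a<..<b} \<Longrightarrow> x \<notin> N \<Longrightarrow> (h has_real_derivative g x) (at x)"
  shows "\<And>x. x \<in> {a..b} \<Longrightarrow> h x = h a + integral {a..x} g"
    and "\<And>x. x \<in> {a..b} \<Longrightarrow> (h has_real_derivative g x) (at x within {a..b})"
proof -
  have gi: "g integrable_on {a..b}" using g by (rule integrable_continuous_interval)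
  have aci: "abs_cont_on {a..b} (\<lambda>x. integral {a..x} g)"
    by (rule ac_integral) (rule absolutely_integrable_continuous_real[OF g])
  define k where "k x = h x - integral {a..x} g" for x
  have ack: "abs_cont_on {a..b} k" unfolding k_def using ac aci by (rule ac_diff)
  show eq: "h x = h a + integral {a..x} g" if x: "x \<in> {a..b}" for x
  proof -
    have "k x = k a"
    proof (rule ac_deriv0_const[where h=k and a=a and b=x and N=N, OF _ _ N])
      show "a \<le> x" using x by auto
      show "abs_cont_on {a..x} k" by (rule ac_subset[OF ack]) (use x in auto)
      fix y assume y: "y \<in> {a<..<x}" "y \<notin> N"
      then have yb: "y \<in> {a<..<b}" using x by auto
      have "((\<lambda>x. integral {a..x} g) has_real_derivative g y) (at y within {a..b})"
        using yb by (intro integral_has_real_derivative[OF g]) auto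
      then have "((\<lambda>x. integral {a..x} g) has_real_derivative g y) (at y)"
        using yb by (simp add: at_within_Icc_at)
      then show "(k has_real_derivative 0) (at y)"
        unfolding k_def using d[OF yb y(2)] by (auto intro!: derivative_eq_intros)
    qed
    then show ?thesis unfolding k_def by simp
  qed
  show "(h has_real_derivative g x) (at x within {a..b})" if x: "x \<in> {a..b}" for x
  proof (rule has_field_derivative_transform_within[of "\<lambda>x. h a + integral {a..x} g" _ _ _ 1])
    show "((\<lambda>x. h a + integral {a..x} g) has_real_derivative g x) (at x within {a..b})"
      using x by (auto intro!: derivative_eq_intros integral_has_real_derivative[OF g])
  next
    fix y assume y: "y \<in> {a..b}"
    show "h a + integral {a..y} g = h y" using eq[OF y] by linarith
  qed (use x in auto)
qed

lemma right_lebesgue_points: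
  fixes q :: "real \<Rightarrow> real"
  assumes q: "\<And>a b. q integrable_on {a..b}"
  obtains N where "negligible N"
    "\<And>x e. x \<notin> N \<Longrightarrow> 0 < e \<Longrightarrow> \<exists>d>0. \<forall>h. 0 < h \<and> h < d \<longrightarrow> \<bar>integral {x..x+h} q / h - q x\<bar> < e"
proof -
  have "\<And>a b::real. q integrable_on cbox a b" using q by simp
  from integrable_ccontinuous_explicit[OF this] obtain N where N: "negligible N"
    "\<And>x e. x \<notin> N \<Longrightarrow> 0 < e \<Longrightarrow> \<exists>d>0. \<forall>h. 0 < h \<and> h < d \<longrightarrow>
        norm (integral (cbox x (x + h *\<^sub>R One)) q /\<^sub>R h ^ DIM(real) - q x) < e"
    by blast
  show ?thesis
  proof (rule that[OF N(1)])
    fix x e :: real assume "x \<notin> N" "0 < e"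
    from N(2)[OF this] obtain d where d: "d > 0" "\<forall>h. 0 < h \<and> h < d \<longrightarrow>
        norm (integral (cbox x (x + h *\<^sub>R One)) q /\<^sub>R h ^ DIM(real) - q x) < e" by blast
    show "\<exists>d>0. \<forall>h. 0 < h \<and> h < d \<longrightarrow> \<bar>integral {x..x+h} q / h - q x\<bar> < e"
    proof (intro exI[of _ d] conjI allI impI)
      fix h :: real assume h: "0 < h \<and> h < d"
      then show "\<bar>integral {x..x+h} q / h - q x\<bar> < e" using d(2)[rule_format, OF h]
        by (simp add: divide_inverse mult.commute)
    qed (rule d(1))
  qed
qed

lemma lebesgue_diff:
  fixes f :: "real \<Rightarrow> real"
  assumes f: "f integrable_on {a..b}"
  obtains N where "negligible N"
    "\<And>x. x \<in> {a<..<b} \<Longrightarrow> x \<notin> N \<Longrightarrow> ((\<lambda>u. integral {a..u} f) has_real_derivative f x) (at x)"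
proof -
  define q where "q x = (if x \<in> {a..b} then f x else 0)" for x
  have qU: "q integrable_on UNIV" unfolding q_def by (rule integrable_restrict_UNIV[THEN iffD2, OF f])
  have qi: "q integrable_on {c..d}" for c d using integrable_on_subcbox[OF qU, of c d] by simp
  define r where "r x = q (- x)" for x
  have ri: "r integrable_on {c..d}" for c d
  proof -
    have "((\<lambda>x. q (-x)) has_integral integral {-d..-c} q) {c..d}"
      using has_integral_reflect_real[where f=q and i="integral {-d..-c} q" and a="-d" and b="-c"] qi[of "-d" "-c"] by auto
    then show ?thesis unfolding r_def by blast
  qed
  obtain N1 where N1: "negligible N1"
    "\<And>x e. x \<notin> N1 \<Longrightarrow> 0 < e \<Longrightarrow> \<exists>d>0. \<forall>h. 0 < h \<and> h < d \<longrightarrow> \<bar>integral {x..x+h} q / h - q x\<bar> < e"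
    using right_lebesgue_points[OF qi] by blast
  obtain N2 where N2: "negligible N2"
    "\<And>x e. x \<notin> N2 \<Longrightarrow> 0 < e \<Longrightarrow> \<exists>d>0. \<forall>h. 0 < h \<and> h < d \<longrightarrow> \<bar>integral {x..x+h} r / h - r x\<bar> < e"
    using right_lebesgue_points[OF ri] by blast
  have negN2': "negligible (uminus ` N2)"
    by (rule negligible_differentiable_image_negligible[OF _ N2(1)]) (auto intro!: derivative_intros)
  show ?thesis
  proof (rule that[of "N1 \<union> uminus ` N2"])
    show "negligible (N1 \<union> uminus ` N2)" using N1(1) negN2' by auto
  next
    fix x assume x: "x \<in> {a<..<b}" "x \<notin> N1 \<union> uminus ` N2"
    have xN1: "x \<notin> N1" and xN2: "-x \<notin> N2" using x(2) by (auto simp: image_iff intro: bexI[of _ "-x"])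
    define F where "F u = integral {a..u} f" for u
    have Fd: "F u - F x = integral {x..u} q" if "x \<le> u" "u \<le> b" for u
    proof -
      have "integral {a..x} f + integral {x..u} f = integral {a..u} f"
        using x that by (intro Henstock_Kurzweil_Integration.integral_combine integrable_subinterval_real[OF f]) auto
      moreover have "integral {x..u} q = integral {x..u} f"
        using x that by (intro integral_cong) (auto simp: q_def)
      ultimately show ?thesis unfolding F_def by simp
    qed
    have Fd2: "F x - F u = integral {u..x} q" if "a \<le> u" "u \<le> x" for u
    proof -
      have "integral {a..u} f + integral {u..x} f = integral {a..x} f"
        using x that by (intro Henstock_Kurzweil_Integration.integral_combine integrable_subinterval_real[OF f]) auto
      moreover have "integral {u..x} q = integral {u..x} f"
        using x that by (intro integral_cong) (auto simp: q_def)
      ultimately show ?thesis unfolding F_def by simp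
    qed
    have qx: "q x = f x" using x by (auto simp: q_def)
    have "((\<lambda>u. (F u - F x) / (u - x)) \<longlongrightarrow> f x) (at x)"
      unfolding LIM_eq
    proof (intro allI impI)
      fix e :: real assume e: "e > 0"
      obtain d1 where d1: "d1 > 0" "\<forall>h. 0 < h \<and> h < d1 \<longrightarrow> \<bar>integral {x..x+h} q / h - q x\<bar> < e"
        using N1(2)[OF xN1 e] by blast
      obtain d2 where d2: "d2 > 0" "\<forall>h. 0 < h \<and> h < d2 \<longrightarrow> \<bar>integral {-x..-x+h} r / h - r (-x)\<bar> < e"
        using N2(2)[OF xN2 e] by blast
      define d where "d = min (min d1 d2) (min (b - x) (x - a))"
      have d: "d > 0" using d1 d2 x unfolding d_def by auto
      show "\<exists>s>0. \<forall>u. u \<noteq> x \<and> norm (u - x) < s \<longrightarrow> norm ((F u - F x) / (u - x) - f x) < e"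
      proof (intro exI[of _ d] conjI allI impI)
        fix u assume u: "u \<noteq> x \<and> norm (u - x) < d"
        show "norm ((F u - F x) / (u - x) - f x) < e"
        proof (cases "x < u")
          case True
          define h where "h = u - x"
          have h: "0 < h" "h < d1" "u \<le> b" using True u unfolding h_def d_def by auto
          have "(F u - F x) / (u - x) = integral {x..x+h} q / h"
            using Fd[of u] h True unfolding h_def by simp
          then show ?thesis using d1(2) h qx by auto
        next
          case False
          then have ux: "u < x" using u by auto
          define h where "h = x - u"
          have h: "0 < h" "h < d2" "a \<le> u" using ux u unfolding h_def d_def by auto
          have "integral {-x..-x+h} r = integral {u..x} q"
            unfolding r_def h_def using integral_reflect_real[of "-x" "-u" q] by simp
          moreover have e1: "F u - F x = - integral {u..x} q" using Fd2[of u] h ux by simp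
          moreover have e2: "u - x = - h" unfolding h_def by simp
          ultimately have "(F u - F x) / (u - x) = integral {-x..-x+h} r / h"
            by simp
          moreover have "r (-x) = f x" using qx unfolding r_def by simp
          ultimately show ?thesis using d2(2) h by auto
        qed
      qed (rule d)
    qed
    then show "((\<lambda>u. integral {a..u} f) has_real_derivative f x) (at x)"
      unfolding has_field_derivative_iff F_def .
  qed
qed

lemma prod_int:
  fixes \<psi> p :: "real \<Rightarrow> real"
  assumes \<psi>: "continuous_on {a..b} \<psi>" and p: "p absolutely_integrable_on {a..b}"
  shows "(\<lambda>s. \<psi> s * p s) absolutely_integrable_on {a..b}"
proof (rule absolutely_integrable_bounded_measurable_product_real[OF _ _ _ p])
  show "\<psi> \<in> borel_measurable (lebesgue_on {a..b})"
    by (rule continuous_imp_measurable_on_sets_lebesgue[OF \<psi>]) auto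
  show "bounded (\<psi> ` {a..b})"
    by (rule compact_imp_bounded, rule compact_continuous_image[OF \<psi>]) auto
qed auto

lemma ac_cong:
  fixes f g :: "real \<Rightarrow> real"
  assumes f: "abs_cont_on S f" and eq: "\<And>x. x \<in> S \<Longrightarrow> f x = g x"
  shows "abs_cont_on S g"
proof (rule acI)
  fix \<epsilon> :: real assume e: "\<epsilon> > 0"
  obtain d1 where d1: "d1 > 0" and D1: "\<And>(n::nat) \<alpha> \<beta>. (\<forall>i<n. \<alpha> i \<in> S \<and> \<beta> i \<in> S \<and> \<alpha> i \<le> \<beta> i) \<Longrightarrow>
       (\<forall>i<n. \<forall>j<n. i \<noteq> j \<longrightarrow> \<beta> i \<le> \<alpha> j \<or> \<beta> j \<le> \<alpha> i) \<Longrightarrow>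
       (\<Sum>i<n. \<beta> i - \<alpha> i) < d1 \<Longrightarrow> (\<Sum>i<n. \<bar>f (\<beta> i) - f (\<alpha> i)\<bar>) < \<epsilon>"
    by (rule acD[OF f e]) blast
  show "\<exists>\<delta>>0. \<forall>(n::nat) \<alpha> \<beta>. (\<forall>i<n. \<alpha> i \<in> S \<and> \<beta> i \<in> S \<and> \<alpha> i \<le> \<beta> i) \<and>
       (\<forall>i<n. \<forall>j<n. i \<noteq> j \<longrightarrow> \<beta> i \<le> \<alpha> j \<or> \<beta> j \<le> \<alpha> i) \<and>
       (\<Sum>i<n. \<beta> i - \<alpha> i) < \<delta> \<longrightarrow> (\<Sum>i<n. \<bar>g (\<beta> i) - g (\<alpha> i)\<bar>) < \<epsilon>"
  proof (intro exI[of _ d1] conjI allI impI)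
    fix n :: nat and \<alpha> \<beta> :: "nat \<Rightarrow> real"
    assume H: "(\<forall>i<n. \<alpha> i \<in> S \<and> \<beta> i \<in> S \<and> \<alpha> i \<le> \<beta> i) \<and>
       (\<forall>i<n. \<forall>j<n. i \<noteq> j \<longrightarrow> \<beta> i \<le> \<alpha> j \<or> \<beta> j \<le> \<alpha> i) \<and>
       (\<Sum>i<n. \<beta> i - \<alpha> i) < d1"
    have "(\<Sum>i<n. \<bar>g (\<beta> i) - g (\<alpha> i)\<bar>) = (\<Sum>i<n. \<bar>f (\<beta> i) - f (\<alpha> i)\<bar>)"
      using H eq by (intro sum.cong) auto
    then show "(\<Sum>i<n. \<bar>g (\<beta> i) - g (\<alpha> i)\<bar>) < \<epsilon>" using D1[of n \<alpha> \<beta>] H by auto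
  qed (rule d1)
qed

lemma ac_C1:
  fixes \<phi> \<phi>' :: "real \<Rightarrow> real"
  assumes d: "\<And>x. (\<phi> has_real_derivative \<phi>' x) (at x)" and c: "continuous_on {a..b} \<phi>'"
  shows "abs_cont_on {a..b} \<phi>"
proof (rule ac_cong)
  show "abs_cont_on {a..b} (\<lambda>x. \<phi> a + integral {a..x} \<phi>')"
    using ac_add[OF ac_const ac_integral[OF absolutely_integrable_continuous_real[OF c]]] by simp
  fix x assume x: "x \<in> {a..b}"
  have "(\<phi>' has_integral (\<phi> x - \<phi> a)) {a..x}"
  proof (rule fundamental_theorem_of_calculus)
    show "a \<le> x" using x by auto
    fix y assume "y \<in> {a..x}"
    show "(\<phi> has_vector_derivative \<phi>' y) (at y within {a..x})"
      using d[of y] by (simp add: has_real_derivative_iff_has_vector_derivative has_vector_derivative_at_within)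
  qed
  then show "\<phi> a + integral {a..x} \<phi>' = \<phi> x" by (simp add: integral_unique)
qed

lemma blk:
  fixes \<phi> \<phi>' \<psi> p :: "real \<Rightarrow> real"
  assumes p: "p absolutely_integrable_on {0..L}" and \<psi>: "continuous_on {0..L} \<psi>"
    and \<phi>: "\<And>x. (\<phi> has_real_derivative \<phi>' x) (at x)" and \<phi>': "continuous_on {0..L} \<phi>'"
  shows "abs_cont_on {0..L} (\<lambda>x. \<phi> x * integral {0..x} (\<lambda>s. \<psi> s * p s))"
    and "continuous_on {0..L} (\<lambda>x. integral {0..x} (\<lambda>s. \<psi> s * p s))"
    and "\<exists>N. negligible N \<and> (\<forall>x\<in>{0<..<L}. x \<notin> N \<longrightarrow>
          ((\<lambda>x. \<phi> x * integral {0..x} (\<lambda>s. \<psi> s * p s)) has_real_derivative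
             (\<phi>' x * integral {0..x} (\<lambda>s. \<psi> s * p s) + \<phi> x * (\<psi> x * p x))) (at x))"
proof -
  have q: "(\<lambda>s. \<psi> s * p s) absolutely_integrable_on {0..L}" by (rule prod_int[OF \<psi> p])
  then have qi: "(\<lambda>s. \<psi> s * p s) integrable_on {0..L}"
    using set_lebesgue_integral_eq_integral(1) by blast
  have acJ: "abs_cont_on {0..L} (\<lambda>x. integral {0..x} (\<lambda>s. \<psi> s * p s))" by (rule ac_integral[OF q])
  show cJ: "continuous_on {0..L} (\<lambda>x. integral {0..x} (\<lambda>s. \<psi> s * p s))"
    by (rule indefinite_integral_continuous_1[OF qi])
  have ac\<phi>: "abs_cont_on {0..L} \<phi>" by (rule ac_C1[OF \<phi> \<phi>'])
  have c\<phi>: "continuous_on {0..L} \<phi>"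
    using \<phi> by (meson DERIV_isCont continuous_at_imp_continuous_on)
  have "\<exists>B. \<forall>x\<in>{0..L}. \<bar>\<phi> x\<bar> \<le> B"
    using compact_imp_bounded[OF compact_continuous_image[OF c\<phi> compact_Icc]]
    unfolding bounded_iff by auto
  then obtain B1 where B10: "\<forall>x\<in>{0..L}. \<bar>\<phi> x\<bar> \<le> B1" by blast
  note B1 = bspec[OF B10]
  have "\<exists>B. \<forall>x\<in>{0..L}. \<bar>integral {0..x} (\<lambda>s. \<psi> s * p s)\<bar> \<le> B"
    using compact_imp_bounded[OF compact_continuous_image[OF cJ compact_Icc]]
    unfolding bounded_iff by auto
  then obtain B2 where B20: "\<forall>x\<in>{0..L}. \<bar>integral {0..x} (\<lambda>s. \<psi> s * p s)\<bar> \<le> B2" by blast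
  note B2 = bspec[OF B20]
  show "abs_cont_on {0..L} (\<lambda>x. \<phi> x * integral {0..x} (\<lambda>s. \<psi> s * p s))"
    by (rule ac_mult[OF ac\<phi> acJ, where B="max B1 B2"]) (use B1 B2 in \<open>force simp: le_max_iff_disj\<close>)+
  obtain N where N: "negligible N"
    "\<And>x. x \<in> {0<..<L} \<Longrightarrow> x \<notin> N \<Longrightarrow> ((\<lambda>u. integral {0..u} (\<lambda>s. \<psi> s * p s)) has_real_derivative \<psi> x * p x) (at x)"
    using lebesgue_diff[OF qi] by blast
  show "\<exists>N. negligible N \<and> (\<forall>x\<in>{0<..<L}. x \<notin> N \<longrightarrow>
          ((\<lambda>x. \<phi> x * integral {0..x} (\<lambda>s. \<psi> s * p s)) has_real_derivative
             (\<phi>' x * integral {0..x} (\<lambda>s. \<psi> s * p s) + \<phi> x * (\<psi> x * p x))) (at x))"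
  proof (intro exI[of _ N] conjI ballI impI)
    fix x assume "x \<in> {0<..<L}" "x \<notin> N"
    from DERIV_mult[OF \<phi>[of x] N(2)[OF this]]
    show "((\<lambda>x. \<phi> x * integral {0..x} (\<lambda>s. \<psi> s * p s)) has_real_derivative
             (\<phi>' x * integral {0..x} (\<lambda>s. \<psi> s * p s) + \<phi> x * (\<psi> x * p x))) (at x)"
      by (simp add: algebra_simps)
  qed (rule N(1))
qed

definition Jf :: "(real \<Rightarrow> real) \<Rightarrow> (real \<Rightarrow> real) \<Rightarrow> real \<Rightarrow> real" where
  "Jf p \<psi> x = integral {0..x} (\<lambda>s. \<psi> s * p s)"

lemma form_lemma:
  fixes p \<psi>1 \<psi>2 \<psi>3 \<psi>4 \<alpha>1 \<alpha>2 \<alpha>3 \<alpha>4 \<beta>1 \<beta>2 \<beta>3 \<beta>4 \<eta> \<eta>' :: "real \<Rightarrow> real"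
  assumes L: "0 \<le> L" and p: "p absolutely_integrable_on {0..L}"
    and \<psi>1: "continuous_on {0..L} \<psi>1" and \<psi>2: "continuous_on {0..L} \<psi>2"
    and \<psi>3: "continuous_on {0..L} \<psi>3" and \<psi>4: "continuous_on {0..L} \<psi>4"
    and d1: "\<And>x. (\<alpha>1 has_real_derivative \<beta>1 x) (at x)" and c1: "continuous_on {0..L} \<beta>1"
    and d2: "\<And>x. (\<alpha>2 has_real_derivative \<beta>2 x) (at x)" and c2: "continuous_on {0..L} \<beta>2"
    and d3: "\<And>x. (\<alpha>3 has_real_derivative \<beta>3 x) (at x)" and c3: "continuous_on {0..L} \<beta>3"
    and d4: "\<And>x. (\<alpha>4 has_real_derivative \<beta>4 x) (at x)" and c4: "continuous_on {0..L} \<beta>4"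
    and d5: "\<And>x. (\<eta> has_real_derivative \<eta>' x) (at x)" and c5: "continuous_on {0..L} \<eta>'"
  defines "F \<equiv> \<lambda>x. \<alpha>1 x * Jf p \<psi>1 x + \<alpha>2 x * Jf p \<psi>2 x + \<alpha>3 x * Jf p \<psi>3 x + \<alpha>4 x * Jf p \<psi>4 x + \<eta> x"
    and "F' \<equiv> \<lambda>x. \<beta>1 x * Jf p \<psi>1 x + \<beta>2 x * Jf p \<psi>2 x + \<beta>3 x * Jf p \<psi>3 x + \<beta>4 x * Jf p \<psi>4 x + \<eta>' x"
    and "c \<equiv> \<lambda>x. \<alpha>1 x * \<psi>1 x + \<alpha>2 x * \<psi>2 x + \<alpha>3 x * \<psi>3 x + \<alpha>4 x * \<psi>4 x"
  shows form_ac: "abs_cont_on {0..L} F"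
    and form_cont: "continuous_on {0..L} F'"
    and form_ae: "\<exists>N. negligible N \<and> (\<forall>x\<in>{0<..<L}. x \<notin> N \<longrightarrow> (F has_real_derivative (F' x + c x * p x)) (at x))"
    and form_deriv: "(\<And>x. x \<in> {0..L} \<Longrightarrow> c x = 0) \<Longrightarrow> x \<in> {0..L} \<Longrightarrow> (F has_real_derivative F' x) (at x within {0..L})"
proof -
  note B1 = blk[OF p \<psi>1 d1 c1, folded Jf_def]
  note B2 = blk[OF p \<psi>2 d2 c2, folded Jf_def]
  note B3 = blk[OF p \<psi>3 d3 c3, folded Jf_def]
  note B4 = blk[OF p \<psi>4 d4 c4, folded Jf_def]
  have Jf_eq: "Jf p \<psi> = (\<lambda>x. integral {0..x} (\<lambda>s. \<psi> s * p s))" for \<psi> by (rule ext) (simp add: Jf_def)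
  show acF: "abs_cont_on {0..L} F"
    unfolding F_def
    by (intro ac_add B1(1) B2(1) B3(1) B4(1) ac_C1[OF d5 c5])
  show cF': "continuous_on {0..L} F'"
    unfolding F'_def using B1(2) B2(2) B3(2) B4(2) c1 c2 c3 c4 c5 unfolding Jf_eq
    by (intro continuous_intros) auto
  obtain N1 where N1: "negligible N1" "\<forall>x\<in>{0<..<L}. x \<notin> N1 \<longrightarrow> ((\<lambda>x. \<alpha>1 x * Jf p \<psi>1 x) has_real_derivative
             (\<beta>1 x * Jf p \<psi>1 x + \<alpha>1 x * (\<psi>1 x * p x))) (at x)" using B1(3) by blast
  obtain N2 where N2: "negligible N2" "\<forall>x\<in>{0<..<L}. x \<notin> N2 \<longrightarrow> ((\<lambda>x. \<alpha>2 x * Jf p \<psi>2 x) has_real_derivative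
             (\<beta>2 x * Jf p \<psi>2 x + \<alpha>2 x * (\<psi>2 x * p x))) (at x)" using B2(3) by blast
  obtain N3 where N3: "negligible N3" "\<forall>x\<in>{0<..<L}. x \<notin> N3 \<longrightarrow> ((\<lambda>x. \<alpha>3 x * Jf p \<psi>3 x) has_real_derivative
             (\<beta>3 x * Jf p \<psi>3 x + \<alpha>3 x * (\<psi>3 x * p x))) (at x)" using B3(3) by blast
  obtain N4 where N4: "negligible N4" "\<forall>x\<in>{0<..<L}. x \<notin> N4 \<longrightarrow> ((\<lambda>x. \<alpha>4 x * Jf p \<psi>4 x) has_real_derivative
             (\<beta>4 x * Jf p \<psi>4 x + \<alpha>4 x * (\<psi>4 x * p x))) (at x)" using B4(3) by blast
  have aeF: "(F has_real_derivative (F' x + c x * p x)) (at x)" if x: "x \<in> {0<..<L}" "x \<notin> N1 \<union> N2 \<union> N3 \<union> N4" for x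
  proof -
    have "(F has_real_derivative
        ((\<beta>1 x * Jf p \<psi>1 x + \<alpha>1 x * (\<psi>1 x * p x)) + (\<beta>2 x * Jf p \<psi>2 x + \<alpha>2 x * (\<psi>2 x * p x))
        + (\<beta>3 x * Jf p \<psi>3 x + \<alpha>3 x * (\<psi>3 x * p x)) + (\<beta>4 x * Jf p \<psi>4 x + \<alpha>4 x * (\<psi>4 x * p x)) + \<eta>' x)) (at x)"
      unfolding F_def
      using x N1(2) N2(2) N3(2) N4(2) d5[of x]
      by (intro DERIV_add) auto
    then show ?thesis unfolding F'_def c_def by (simp add: algebra_simps)
  qed
  show "\<exists>N. negligible N \<and> (\<forall>x\<in>{0<..<L}. x \<notin> N \<longrightarrow> (F has_real_derivative (F' x + c x * p x)) (at x))"
    using aeF N1(1) N2(1) N3(1) N4(1) by (intro exI[of _ "N1 \<union> N2 \<union> N3 \<union> N4"]) auto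
  assume c0: "\<And>x. x \<in> {0..L} \<Longrightarrow> c x = 0" and x: "x \<in> {0..L}"
  show "(F has_real_derivative F' x) (at x within {0..L})"
  proof (rule ac_ae_deriv(2)[OF L acF cF' _ _ x])
    show "negligible (N1 \<union> N2 \<union> N3 \<union> N4)" using N1(1) N2(1) N3(1) N4(1) by auto
    fix y assume y: "y \<in> {0<..<L}" "y \<notin> N1 \<union> N2 \<union> N3 \<union> N4"
    then show "(F has_real_derivative F' y) (at y)" using aeF[OF y] c0[of y] by simp
  qed
qed

lemma coef_derivs:
  fixes L M a S BT DT x :: real
  assumes a: "a > 0" "a * a = M" and S: "S \<noteq> 0" and L: "L \<noteq> 0"
  shows "((\<lambda>x. (L-x)/(M*L)) has_real_derivative -1/(M*L)) (at x)"
   "((\<lambda>x. -x/(M*L)) has_real_derivative -1/(M*L)) (at x)"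
   "((\<lambda>x. - sinh(a*(L-x))/(M*a*S)) has_real_derivative cosh(a*(L-x))/(M*S)) (at x)"
   "((\<lambda>x. sinh(a*x)/(M*a*S)) has_real_derivative cosh(a*x)/(M*S)) (at x)"
   "((\<lambda>x. x/(M*L) * BT - sinh(a*x)/(M*a*S) * DT) has_real_derivative (BT/(M*L) - cosh(a*x)/(M*S) * DT)) (at x)"
   "((\<lambda>x. -1/(M*L)) has_real_derivative 0) (at x)"
   "((\<lambda>x. cosh(a*(L-x))/(M*S)) has_real_derivative -a * sinh(a*(L-x))/(M*S)) (at x)"
   "((\<lambda>x. cosh(a*x)/(M*S)) has_real_derivative a * sinh(a*x)/(M*S)) (at x)"
   "((\<lambda>x. BT/(M*L) - cosh(a*x)/(M*S) * DT) has_real_derivative (- a * sinh(a*x)/(M*S) * DT)) (at x)"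
   "((\<lambda>x. 0) has_real_derivative 0) (at x)"
   "((\<lambda>x. -a * sinh(a*(L-x))/(M*S)) has_real_derivative cosh(a*(L-x))/S) (at x)"
   "((\<lambda>x. a * sinh(a*x)/(M*S)) has_real_derivative cosh(a*x)/S) (at x)"
   "((\<lambda>x. - a * sinh(a*x)/(M*S) * DT) has_real_derivative (- cosh(a*x)/S * DT)) (at x)"
   "((\<lambda>x. cosh(a*(L-x))/S) has_real_derivative -a * sinh(a*(L-x))/S) (at x)"
   "((\<lambda>x. cosh(a*x)/S) has_real_derivative a * sinh(a*x)/S) (at x)"
   "((\<lambda>x. - cosh(a*x)/S * DT) has_real_derivative (- a * sinh(a*x)/S * DT)) (at x)"
proof -
  have M: "M \<noteq> 0" using a by auto
  show "((\<lambda>x. (L-x)/(M*L)) has_real_derivative -1/(M*L)) (at x)"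
    using M L by (auto intro!: derivative_eq_intros simp: field_simps)
  show "((\<lambda>x. -x/(M*L)) has_real_derivative -1/(M*L)) (at x)"
    using M L by (auto intro!: derivative_eq_intros simp: field_simps)
  show "((\<lambda>x. - sinh(a*(L-x))/(M*a*S)) has_real_derivative cosh(a*(L-x))/(M*S)) (at x)"
    using a S M by (auto intro!: derivative_eq_intros simp: field_simps)
  show "((\<lambda>x. sinh(a*x)/(M*a*S)) has_real_derivative cosh(a*x)/(M*S)) (at x)"
    using a S M by (auto intro!: derivative_eq_intros simp: field_simps)
  show "((\<lambda>x. x/(M*L) * BT - sinh(a*x)/(M*a*S) * DT) has_real_derivative (BT/(M*L) - cosh(a*x)/(M*S) * DT)) (at x)"
    using a S M L by (auto intro!: derivative_eq_intros simp: field_simps)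
  show "((\<lambda>x. -1/(M*L)) has_real_derivative 0) (at x)"
    by (auto intro!: derivative_eq_intros)
  show "((\<lambda>x. cosh(a*(L-x))/(M*S)) has_real_derivative -a * sinh(a*(L-x))/(M*S)) (at x)"
    using a S M by (auto intro!: derivative_eq_intros simp: field_simps)
  show "((\<lambda>x. cosh(a*x)/(M*S)) has_real_derivative a * sinh(a*x)/(M*S)) (at x)"
    using a S M by (auto intro!: derivative_eq_intros simp: field_simps)
  show "((\<lambda>x. BT/(M*L) - cosh(a*x)/(M*S) * DT) has_real_derivative (- a * sinh(a*x)/(M*S) * DT)) (at x)"
    using a S M by (auto intro!: derivative_eq_intros simp: field_simps)
  show "((\<lambda>x. 0) has_real_derivative 0) (at x)"
    by (auto intro!: derivative_eq_intros)
  show "((\<lambda>x. -a * sinh(a*(L-x))/(M*S)) has_real_derivative cosh(a*(L-x))/S) (at x)"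
    using a S M by (auto intro!: derivative_eq_intros simp: field_simps a(2)[symmetric])
  show "((\<lambda>x. a * sinh(a*x)/(M*S)) has_real_derivative cosh(a*x)/S) (at x)"
    using a S M by (auto intro!: derivative_eq_intros simp: field_simps a(2)[symmetric])
  show "((\<lambda>x. - a * sinh(a*x)/(M*S) * DT) has_real_derivative (- cosh(a*x)/S * DT)) (at x)"
    using a S M by (auto intro!: derivative_eq_intros simp: field_simps a(2)[symmetric])
  show "((\<lambda>x. cosh(a*(L-x))/S) has_real_derivative -a * sinh(a*(L-x))/S) (at x)"
    using a S M by (auto intro!: derivative_eq_intros simp: field_simps)
  show "((\<lambda>x. cosh(a*x)/S) has_real_derivative a * sinh(a*x)/S) (at x)"
    using a S M by (auto intro!: derivative_eq_intros simp: field_simps)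
  show "((\<lambda>x. - cosh(a*x)/S * DT) has_real_derivative (- a * sinh(a*x)/S * DT)) (at x)"
    using a S M by (auto intro!: derivative_eq_intros simp: field_simps)
qed

lemma pint:
  fixes \<psi> p :: "real \<Rightarrow> real"
  assumes \<psi>: "continuous_on {0..L} \<psi>" and p: "p absolutely_integrable_on {0..L}" and uv: "{u..v} \<subseteq> {0..L}"
  shows "(\<lambda>s. \<psi> s * p s) integrable_on {u..v}"
proof -
  have "(\<lambda>s. \<psi> s * p s) integrable_on {0..L}"
    using set_lebesgue_integral_eq_integral(1)[OF prod_int[OF \<psi> p]] .
  then show ?thesis using uv by (rule integrable_subinterval_real)
qed

lemma int_split:
  fixes \<psi> p :: "real \<Rightarrow> real"
  assumes \<psi>: "continuous_on {0..L} \<psi>" and p: "p absolutely_integrable_on {0..L}" and x: "x \<in> {0..L}"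
  shows "integral {x..L} (\<lambda>s. \<psi> s * p s) = Jf p \<psi> L - Jf p \<psi> x"
proof -
  have "integral {0..x} (\<lambda>s. \<psi> s * p s) + integral {x..L} (\<lambda>s. \<psi> s * p s) = integral {0..L} (\<lambda>s. \<psi> s * p s)"
    using x by (intro Henstock_Kurzweil_Integration.integral_combine pint[OF \<psi> p]) auto
  then show ?thesis unfolding Jf_def by simp
qed

lemma rep:
  fixes L M x :: real and p :: "real \<Rightarrow> real"
  assumes L: "L > 0" and M: "M > 0" and p: "p absolutely_integrable_on {0..L}" and x: "x \<in> {0..L}"
  defines "a \<equiv> sqrt M" and "S \<equiv> sinh (sqrt M * L)"
  shows "(LINT s:{0..L}|lebesgue. G L M x s * p s) =
     (L-x)/(M * L) * Jf p (\<lambda>s. s) x + (-x/(M * L)) * Jf p (\<lambda>s. L - s) x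
     + (- sinh(a * (L-x))/(M * a * S)) * Jf p (\<lambda>s. sinh(a * s)) x + sinh(a * x)/(M * a * S) * Jf p (\<lambda>s. sinh(a * (L-s))) x
     + (x/(M * L) * Jf p (\<lambda>s. L - s) L - sinh(a * x)/(M * a * S) * Jf p (\<lambda>s. sinh(a * (L-s))) L)"
proof -
  define g2 where "g2 s = s * (L-x)/(M * L) - sinh(a * s) * sinh(a * (L-x))/(M * a * S)" for s
  define g1 where "g1 s = x * (L-s)/(M * L) - sinh(a * x) * sinh(a * (L-s))/(M * a * S)" for s
  have G2: "G L M x s = g2 s" if "s \<in> {0..x}" for s
    using that unfolding G_def g2_def a_def S_def by auto
  have G1: "G L M x s = g1 s" if "s \<in> {x..L}" for s
    using that unfolding G_def g1_def a_def S_def by auto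
  have sub1: "{0..x} \<subseteq> {0..L}" and sub2: "{x..L} \<subseteq> {0..L}" using x by auto
  have apos: "a > 0" unfolding a_def using M by simp
  have Spos: "S > 0" unfolding S_def using M L by simp
  have nz: "M * L \<noteq> 0" "M * a * S \<noteq> 0" using M L apos Spos by auto
  have c2: "continuous_on {0..x} g2" unfolding g2_def using nz by (intro continuous_intros) auto
  have c1: "continuous_on {x..L} g1" unfolding g1_def using nz by (intro continuous_intros) auto
  have ai2: "(\<lambda>s. g2 s * p s) absolutely_integrable_on {0..x}"
    by (rule prod_int[OF c2 absolutely_integrable_on_subinterval[OF p sub1]])
  have ai1: "(\<lambda>s. g1 s * p s) absolutely_integrable_on {x..L}"
    by (rule prod_int[OF c1 absolutely_integrable_on_subinterval[OF p sub2]])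
  have aiG2: "(\<lambda>s. G L M x s * p s) absolutely_integrable_on {0..x}"
    using ai2 by (subst set_integrable_cong[of lebesgue lebesgue "{0..x}" "{0..x}" _ "\<lambda>s. g2 s * p s"]) (auto simp: G2)
  have aiG1: "(\<lambda>s. G L M x s * p s) absolutely_integrable_on {x..L}"
    using ai1 by (subst set_integrable_cong[of lebesgue lebesgue "{x..L}" "{x..L}" _ "\<lambda>s. g1 s * p s"]) (auto simp: G1)
  have U: "{0..x} \<union> {x..L} = {0..L}" using x by auto
  have aiG: "(\<lambda>s. G L M x s * p s) absolutely_integrable_on {0..L}"
    using absolutely_integrable_Un[OF aiG2 aiG1] unfolding U .
  have "(LINT s:{0..L}|lebesgue. G L M x s * p s) = integral {0..L} (\<lambda>s. G L M x s * p s)"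
    by (rule set_lebesgue_integral_eq_integral(2)[OF aiG])
  also have "\<dots> = integral {0..x} (\<lambda>s. G L M x s * p s) + integral {x..L} (\<lambda>s. G L M x s * p s)"
    using x set_lebesgue_integral_eq_integral(1)[OF aiG]
    by (intro Henstock_Kurzweil_Integration.integral_combine[symmetric]) auto
  also have "integral {0..x} (\<lambda>s. G L M x s * p s)
      = integral {0..x} (\<lambda>s. (L-x)/(M * L) * (s * p s) - sinh(a * (L-x))/(M * a * S) * (sinh(a * s) * p s))"
    by (intro integral_cong) (auto simp: G2 g2_def algebra_simps divide_inverse)
  also have "\<dots> = (L-x)/(M * L) * Jf p (\<lambda>s. s) x - sinh(a * (L-x))/(M * a * S) * Jf p (\<lambda>s. sinh(a * s)) x"
  proof -
    have i1: "(\<lambda>s. s * p s) integrable_on {0..x}" by (rule pint[OF _ p sub1]) (intro continuous_intros)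
    have i3: "(\<lambda>s. sinh (a * s) * p s) integrable_on {0..x}" by (rule pint[OF _ p sub1]) (intro continuous_intros)
    show ?thesis unfolding Jf_def
      by (subst integral_diff[OF integrable_on_mult_right[OF i1] integrable_on_mult_right[OF i3]]) simp
  qed
  also have "integral {x..L} (\<lambda>s. G L M x s * p s)
      = integral {x..L} (\<lambda>s. x/(M * L) * ((L - s) * p s) - sinh(a * x)/(M * a * S) * (sinh(a * (L-s)) * p s))"
    by (intro integral_cong) (auto simp: G1 g1_def algebra_simps divide_inverse)
  also have "\<dots> = x/(M * L) * integral {x..L} (\<lambda>s. (L - s) * p s) - sinh(a * x)/(M * a * S) * integral {x..L} (\<lambda>s. sinh(a * (L-s)) * p s)"
  proof -
    have i1: "(\<lambda>s. (L - s) * p s) integrable_on {x..L}" by (rule pint[OF _ p sub2]) (intro continuous_intros)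
    have i3: "(\<lambda>s. sinh (a * (L - s)) * p s) integrable_on {x..L}" by (rule pint[OF _ p sub2]) (intro continuous_intros)
    show ?thesis
      by (subst integral_diff[OF integrable_on_mult_right[OF i1] integrable_on_mult_right[OF i3]]) simp
  qed
  also have "integral {x..L} (\<lambda>s. (L - s) * p s) = Jf p (\<lambda>s. L - s) L - Jf p (\<lambda>s. L - s) x"
    by (rule int_split[OF _ p x]) (intro continuous_intros)
  also have "integral {x..L} (\<lambda>s. sinh(a * (L-s)) * p s) = Jf p (\<lambda>s. sinh(a * (L-s))) L - Jf p (\<lambda>s. sinh(a * (L-s))) x"
    by (rule int_split[OF _ p x]) (intro continuous_intros)
  finally show ?thesis by (simp add: algebra_simps)
qed

lemma Jf_0[simp]: "Jf p \<psi> 0 = 0" by (simp add: Jf_def)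

lemma green_props:
  fixes L M :: real and p :: "real \<Rightarrow> real"
  assumes L: "L > 0" and M: "M > 0" and p: "p absolutely_integrable_on {0..L}"
  defines "U \<equiv> \<lambda>x. LINT s:{0..L}|lebesgue. G L M x s * p s"
  shows "\<exists>U1 U2 U3 N. (\<forall>x\<in>{0..L}. (U has_real_derivative U1 x) (at x within {0..L})) \<and>
     (\<forall>x\<in>{0..L}. (U1 has_real_derivative U2 x) (at x within {0..L})) \<and>
     (\<forall>x\<in>{0..L}. (U2 has_real_derivative U3 x) (at x within {0..L})) \<and>
     abs_cont_on {0..L} U3 \<and> continuous_on {0..L} U3 \<and> negligible N \<and>
     (\<forall>x\<in>{0<..<L}. x \<notin> N \<longrightarrow> (U3 has_real_derivative (p x + M * U2 x)) (at x)) \<and>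
     U 0 = 0 \<and> U L = 0 \<and> U2 0 = 0 \<and> U2 L = 0"
proof -
  define a where "a = sqrt M"
  define S where "S = sinh (sqrt M * L)"
  have apos: "a > 0" unfolding a_def using M by simp
  have aa: "a * a = M" unfolding a_def using M by simp
  have Spos: "S > 0" unfolding S_def using M L by simp
  have S': "S = sinh (a * L)" unfolding S_def a_def ..
  have Sne: "S \<noteq> 0" and Lne: "L \<noteq> 0" and Mne: "M \<noteq> 0" using Spos L M by auto
  have L0: "0 \<le> L" using L by simp
  define BT where "BT = Jf p (\<lambda>s. L - s) L"
  define DT where "DT = Jf p (\<lambda>s. sinh (a * (L - s))) L"
  note cd0 = coef_derivs[OF apos aa Sne Lne]
  note cd5 = cd0(5)[where BT=BT and DT=DT] and cd9 = cd0(9)[where BT=BT and DT=DT]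
    and cd13 = cd0(13)[where DT=DT] and cd16 = cd0(16)[where DT=DT]
  note cd = cd0(1-4) cd5 cd0(6-8) cd9 cd0(10-12) cd13 cd0(14-15) cd16
  have \<psi>1: "continuous_on {0..L} (\<lambda>s::real. s)" by (intro continuous_intros)
  have \<psi>2: "continuous_on {0..L} (\<lambda>s::real. L - s)" by (intro continuous_intros)
  have \<psi>3: "continuous_on {0..L} (\<lambda>s. sinh (a * s))" by (intro continuous_intros)
  have \<psi>4: "continuous_on {0..L} (\<lambda>s. sinh (a * (L - s)))" by (intro continuous_intros)
  note FL = form_lemma[OF L0 p \<psi>1 \<psi>2 \<psi>3 \<psi>4]
  have cc: "continuous_on {0..L} (\<lambda>x. c)" for c :: real by (intro continuous_intros)
  have ccs: "continuous_on {0..L} (\<lambda>x. cosh (a * (L - x)) / (M * S))" "continuous_on {0..L} (\<lambda>x. cosh (a * x) / (M * S))"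
    "continuous_on {0..L} (\<lambda>x. BT / (M * L) - cosh (a * x) / (M * S) * DT)"
    "continuous_on {0..L} (\<lambda>x. - a * sinh (a * (L - x)) / (M * S))" "continuous_on {0..L} (\<lambda>x. a * sinh (a * x) / (M * S))"
    "continuous_on {0..L} (\<lambda>x. - a * sinh (a * x) / (M * S) * DT)"
    "continuous_on {0..L} (\<lambda>x. cosh (a * (L - x)) / S)" "continuous_on {0..L} (\<lambda>x. cosh (a * x) / S)"
    "continuous_on {0..L} (\<lambda>x. - cosh (a * x) / S * DT)"
    "continuous_on {0..L} (\<lambda>x. - a * sinh (a * (L - x)) / S)" "continuous_on {0..L} (\<lambda>x. a * sinh (a * x) / S)"
    "continuous_on {0..L} (\<lambda>x. - a * sinh (a * x) / S * DT)"
    using Sne Mne by (auto intro!: continuous_intros)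
  note F0 = FL[OF cd(1) cc cd(2) cc cd(3) ccs(1) cd(4) ccs(2) cd(5) ccs(3)]
  note F1 = FL[OF cd(6) cc cd(6) cc cd(7) ccs(4) cd(8) ccs(5) cd(9) ccs(6)]
  note F2 = FL[OF cd(10) cc cd(10) cc cd(11) ccs(7) cd(12) ccs(8) cd(13) ccs(9)]
  note F3 = FL[OF cd(10) cc cd(10) cc cd(14) ccs(10) cd(15) ccs(11) cd(16) ccs(12)]
  have sh: "sinh (a * x) * cosh (a * (L - x)) + cosh (a * x) * sinh (a * (L - x)) = S" for x
    using sinh_add[of "a * x" "a * (L - x)"] unfolding S' by (simp add: algebra_simps)
  have c0: "(L - x) / (M * L) * x + - x / (M * L) * (L - x) + - sinh (a * (L - x)) / (M * a * S) * sinh (a * x)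
      + sinh (a * x) / (M * a * S) * sinh (a * (L - x)) = 0" for x
    by (simp add: field_simps)
  have c1: "- 1 / (M * L) * x + - 1 / (M * L) * (L - x) + cosh (a * (L - x)) / (M * S) * sinh (a * x)
      + cosh (a * x) / (M * S) * sinh (a * (L - x)) = 0" for x
  proof -
    define u where "u = a * x"
    define w where "w = a * (L - x)"
    have shuw: "sinh u * cosh w + cosh u * sinh w = S" using sh[of x] unfolding u_def w_def .
    have "cosh w / (M * S) * sinh u + cosh u / (M * S) * sinh w = (sinh u * cosh w + cosh u * sinh w) / (M * S)"
      using Sne Mne by (simp add: field_simps)
    also have "\<dots> = 1 / M" unfolding shuw using Sne by simp
    finally have e1: "cosh w / (M * S) * sinh u + cosh u / (M * S) * sinh w = 1 / M" .
    have e2: "- 1 / (M * L) * x + - 1 / (M * L) * (L - x) = - 1 / M" using Lne Mne by (simp add: field_simps)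
    show ?thesis using e1 e2 unfolding u_def w_def by linarith
  qed
  have c2: "0 * x + 0 * (L - x) + - a * sinh (a * (L - x)) / (M * S) * sinh (a * x)
      + a * sinh (a * x) / (M * S) * sinh (a * (L - x)) = 0" for x
    by (simp add: field_simps)
  have c3: "0 * x + 0 * (L - x) + cosh (a * (L - x)) / S * sinh (a * x) + cosh (a * x) / S * sinh (a * (L - x)) = 1" for x
  proof -
    define u where "u = a * x"
    define w where "w = a * (L - x)"
    have shuw: "sinh u * cosh w + cosh u * sinh w = S" using sh[of x] unfolding u_def w_def .
    have "cosh w / S * sinh u + cosh u / S * sinh w = (sinh u * cosh w + cosh u * sinh w) / S"
      using Sne by (simp add: field_simps)
    also have "\<dots> = 1" unfolding shuw using Sne by simp
    finally show ?thesis unfolding u_def w_def by simp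
  qed
  define J1 where "J1 = Jf p (\<lambda>s. s)"
  define J2 where "J2 = Jf p ((-) L)"
  define J3 where "J3 = Jf p (\<lambda>s. sinh (a * s))"
  define J4 where "J4 = Jf p (\<lambda>s. sinh (a * (L - s)))"
  define F0 where "F0 = (\<lambda>x. (L - x) / (M * L) * Jf p (\<lambda>s. s) x + - x / (M * L) * Jf p ((-) L) x +
        - sinh (a * (L - x)) / (M * a * S) * Jf p (\<lambda>s. sinh (a * s)) x +
        sinh (a * x) / (M * a * S) * Jf p (\<lambda>s. sinh (a * (L - s))) x +
        (x / (M * L) * BT - sinh (a * x) / (M * a * S) * DT))"
  define F1 where "F1 = (\<lambda>x. - 1 / (M * L) * Jf p (\<lambda>s. s) x + - 1 / (M * L) * Jf p ((-) L) x +
      cosh (a * (L - x)) / (M * S) * Jf p (\<lambda>s. sinh (a * s)) x +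
      cosh (a * x) / (M * S) * Jf p (\<lambda>s. sinh (a * (L - s))) x +
      (BT / (M * L) - cosh (a * x) / (M * S) * DT))"
  define F2 where "F2 = (\<lambda>x. 0 * Jf p (\<lambda>s. s) x + 0 * Jf p ((-) L) x +
      - a * sinh (a * (L - x)) / (M * S) * Jf p (\<lambda>s. sinh (a * s)) x +
      a * sinh (a * x) / (M * S) * Jf p (\<lambda>s. sinh (a * (L - s))) x + - a * sinh (a * x) / (M * S) * DT)"
  define F3 where "F3 = (\<lambda>x. 0 * Jf p (\<lambda>s. s) x + 0 * Jf p ((-) L) x +
                cosh (a * (L - x)) / S * Jf p (\<lambda>s. sinh (a * s)) x +
                cosh (a * x) / S * Jf p (\<lambda>s. sinh (a * (L - s))) x +
                - cosh (a * x) / S * DT)"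
  define F4 where "F4 = (\<lambda>x. 0 * Jf p (\<lambda>s. s) x + 0 * Jf p ((-) L) x +
      - a * sinh (a * (L - x)) / S * Jf p (\<lambda>s. sinh (a * s)) x +
      a * sinh (a * x) / S * Jf p (\<lambda>s. sinh (a * (L - s))) x + - a * sinh (a * x) / S * DT)"
  have dF0: "(F0 has_real_derivative F1 x) (at x within {0..L})" if x: "x \<in> {0..L}" for x
    unfolding F0_def F1_def by (rule F0(4)[OF _ x]) (rule c0)
  have dF1: "(F1 has_real_derivative F2 x) (at x within {0..L})" if x: "x \<in> {0..L}" for x
    unfolding F1_def F2_def by (rule F1(4)[OF _ x]) (rule c1)
  have dF2: "(F2 has_real_derivative F3 x) (at x within {0..L})" if x: "x \<in> {0..L}" for x
    unfolding F2_def F3_def by (rule F2(4)[OF _ x]) (rule c2)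
  have acF3: "abs_cont_on {0..L} F3" unfolding F3_def by (rule F3(1))
  have cF3: "continuous_on {0..L} F3" unfolding F3_def by (rule F2(2))
  obtain N where N: "negligible N" "\<forall>x\<in>{0<..<L}. x \<notin> N \<longrightarrow> (F3 has_real_derivative (F4 x + 1 * p x)) (at x)"
    using F3(3) unfolding F3_def F4_def c3 by blast
  have F42: "F4 x = M * F2 x" for x unfolding F4_def F2_def using Mne by (simp add: field_simps)
  have UF: "U x = F0 x" if x: "x \<in> {0..L}" for x
    unfolding U_def F0_def BT_def DT_def using rep[OF L M p x, folded S_def, folded a_def] by simp
  have dU: "(U has_real_derivative F1 x) (at x within {0..L})" if x: "x \<in> {0..L}" for x
    by (rule has_field_derivative_transform_within[OF dF0[OF x] zero_less_one x]) (simp add: UF)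
  have b1: "U 0 = 0" using UF[of 0] L by (simp add: F0_def)
  have b2: "U L = 0" using UF[of L] L by (simp add: F0_def BT_def DT_def)
  have b3: "F2 0 = 0" by (simp add: F2_def)
  have b4: "F2 L = 0" by (simp add: F2_def DT_def)
  have ae: "\<forall>x\<in>{0<..<L}. x \<notin> N \<longrightarrow> (F3 has_real_derivative (p x + M * F2 x)) (at x)"
  proof (intro ballI impI)
    fix x assume x: "x \<in> {0<..<L}" "x \<notin> N"
    have "(F3 has_real_derivative (F4 x + 1 * p x)) (at x)" using N(2) x by blast
    moreover have "F4 x + 1 * p x = p x + M * F2 x" using F42[of x] by simp
    ultimately show "(F3 has_real_derivative (p x + M * F2 x)) (at x)" by metis
  qed
  have d1: "\<forall>x\<in>{0..L}. (U has_real_derivative F1 x) (at x within {0..L})" using dU by blast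
  have d2: "\<forall>x\<in>{0..L}. (F1 has_real_derivative F2 x) (at x within {0..L})" using dF1 by blast
  have d3: "\<forall>x\<in>{0..L}. (F2 has_real_derivative F3 x) (at x within {0..L})" using dF2 by blast
  show ?thesis
    by (rule exI[of _ F1], rule exI[of _ F2], rule exI[of _ F3], rule exI[of _ N])
      (intro conjI d1 d2 d3 acF3 cF3 N(1) ae b1 b2 b3 b4)
qed

lemma deriv_within_cont:
  fixes f f' :: "real \<Rightarrow> real"
  assumes "\<forall>x\<in>S. (f has_real_derivative f' x) (at x within S)"
  shows "continuous_on S f"
  using assms by (meson DERIV_continuous continuous_on_eq_continuous_within)

lemma energy:
  fixes w w1 w2 w3 w4 :: "real \<Rightarrow> real" and L M :: real
  assumes L: "0 \<le> L"
   and d0: "\<forall>x\<in>{0..L}. (w has_real_derivative w1 x) (at x within {0..L})"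
   and d1: "\<forall>x\<in>{0..L}. (w1 has_real_derivative w2 x) (at x within {0..L})"
   and d2: "\<forall>x\<in>{0..L}. (w2 has_real_derivative w3 x) (at x within {0..L})"
   and d3: "\<forall>x\<in>{0..L}. (w3 has_real_derivative w4 x) (at x within {0..L})"
   and c4: "continuous_on {0..L} w4"
   and bc: "w 0 = 0" "w L = 0" "w2 0 = 0" "w2 L = 0"
  shows "integral {0..L} (\<lambda>x. w x * (w4 x - M * w2 x)) = integral {0..L} (\<lambda>x. (w2 x)\<^sup>2 + M * (w1 x)\<^sup>2)"
proof -
  have c0: "continuous_on {0..L} w" by (rule deriv_within_cont[OF d0])
  have c1: "continuous_on {0..L} w1" by (rule deriv_within_cont[OF d1])
  have c2: "continuous_on {0..L} w2" by (rule deriv_within_cont[OF d2])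
  define \<Phi> where "\<Phi> x = w x * w3 x - w1 x * w2 x - M * (w x * w1 x)" for x
  have "((\<lambda>x. w x * (w4 x - M * w2 x) - ((w2 x)\<^sup>2 + M * (w1 x)\<^sup>2)) has_integral (\<Phi> L - \<Phi> 0)) {0..L}"
  proof (rule fundamental_theorem_of_calculus[OF L])
    fix x assume x: "x \<in> {0..L}"
    have e0: "(w has_real_derivative w1 x) (at x within {0..L})" using d0 x by blast
    have e1: "(w1 has_real_derivative w2 x) (at x within {0..L})" using d1 x by blast
    have e2: "(w2 has_real_derivative w3 x) (at x within {0..L})" using d2 x by blast
    have e3: "(w3 has_real_derivative w4 x) (at x within {0..L})" using d3 x by blast
    have "((\<lambda>x. w x * w3 x - w1 x * w2 x - M * (w x * w1 x)) has_real_derivative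
        (w1 x * w3 x + w4 x * w x - (w2 x * w2 x + w3 x * w1 x) - M * (w1 x * w1 x + w2 x * w x)))
        (at x within {0..L})"
      by (intro DERIV_diff DERIV_mult DERIV_cmult e0 e1 e2 e3)
    then have "(\<Phi> has_real_derivative (w1 x * w3 x + w x * w4 x - (w2 x * w2 x + w1 x * w3 x) - M * (w1 x * w1 x + w x * w2 x)))
        (at x within {0..L})"
      unfolding \<Phi>_def by (rule DERIV_cong) (simp add: algebra_simps)
    then show "(\<Phi> has_vector_derivative (w x * (w4 x - M * w2 x) - ((w2 x)\<^sup>2 + M * (w1 x)\<^sup>2))) (at x within {0..L})"
      by (simp add: has_real_derivative_iff_has_vector_derivative[symmetric] algebra_simps power2_eq_square)
  qed
  moreover have "\<Phi> L - \<Phi> 0 = 0" unfolding \<Phi>_def using bc by simp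
  ultimately have "integral {0..L} (\<lambda>x. w x * (w4 x - M * w2 x) - ((w2 x)\<^sup>2 + M * (w1 x)\<^sup>2)) = 0"
    by (simp add: integral_unique)
  moreover have "integral {0..L} (\<lambda>x. w x * (w4 x - M * w2 x) - ((w2 x)\<^sup>2 + M * (w1 x)\<^sup>2))
      = integral {0..L} (\<lambda>x. w x * (w4 x - M * w2 x)) - integral {0..L} (\<lambda>x. (w2 x)\<^sup>2 + M * (w1 x)\<^sup>2)"
    using c0 c1 c2 c4 by (intro integral_diff integrable_continuous_interval continuous_intros)
  ultimately show ?thesis by simp
qed

lemma green_props2:
  fixes L M :: real and p U :: "real \<Rightarrow> real"
  assumes L: "L > 0" and M: "M > 0" and p: "p absolutely_integrable_on {0..L}"
    and U: "U = (\<lambda>x. LINT s:{0..L}|lebesgue. G L M x s * p s)"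
  shows "\<exists>U1 U2 U3 N. (\<forall>x\<in>{0..L}. (U has_real_derivative U1 x) (at x within {0..L})) \<and>
     (\<forall>x\<in>{0..L}. (U1 has_real_derivative U2 x) (at x within {0..L})) \<and>
     (\<forall>x\<in>{0..L}. (U2 has_real_derivative U3 x) (at x within {0..L})) \<and>
     abs_cont_on {0..L} U3 \<and> continuous_on {0..L} U3 \<and> negligible N \<and>
     (\<forall>x\<in>{0<..<L}. x \<notin> N \<longrightarrow> (U3 has_real_derivative (p x + M * U2 x)) (at x)) \<and>
     U 0 = 0 \<and> U L = 0 \<and> U2 0 = 0 \<and> U2 L = 0"
  using green_props[OF L M p] unfolding U .

lemma green_props1:
  fixes L M :: real and U :: "real \<Rightarrow> real"
  assumes L: "L > 0" and M: "M > 0"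
    and U: "U = (\<lambda>x. LINT s:{0..L}|lebesgue. G L M x s)"
  shows "\<exists>U1 U2 U3 N. (\<forall>x\<in>{0..L}. (U has_real_derivative U1 x) (at x within {0..L})) \<and>
     (\<forall>x\<in>{0..L}. (U1 has_real_derivative U2 x) (at x within {0..L})) \<and>
     (\<forall>x\<in>{0..L}. (U2 has_real_derivative U3 x) (at x within {0..L})) \<and>
     abs_cont_on {0..L} U3 \<and> continuous_on {0..L} U3 \<and> negligible N \<and>
     (\<forall>x\<in>{0<..<L}. x \<notin> N \<longrightarrow> (U3 has_real_derivative (1 + M * U2 x)) (at x)) \<and>
     U 0 = 0 \<and> U L = 0 \<and> U2 0 = 0 \<and> U2 L = 0"
proof -
  have p1: "(\<lambda>s::real. 1::real) absolutely_integrable_on {0..L}"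
    by (rule absolutely_integrable_on_const) simp
  have "U = (\<lambda>x. LINT s:{0..L}|lebesgue. G L M x s * (\<lambda>s. 1) s)" unfolding U by simp
  from green_props2[OF L M p1 this] show ?thesis by simp
qed

theorem corollary2p1:
  fixes L M N :: real and p :: "real \<Rightarrow> real"
  assumes "L > 0" and "M > 0" and "N > 0"
    and "set_integrable lebesgue {0..L} p"
  shows "let Y = (\<lambda>x. (LINT s:{0..L}|lebesgue. G L M x s * p s)
            - N * (LINT s:{0..L}|lebesgue. G L M x s)
              / (1 + N * (LINT x':{0..L}|lebesgue. LINT s:{0..L}|lebesgue. G L M x' s))
              * (LINT x':{0..L}|lebesgue. LINT s:{0..L}|lebesgue. G L M x' s * p s))
         in bvp_solution L M N p Y \<and>
            (\<forall>y. bvp_solution L M N p y \<longrightarrow> (\<forall>x\<in>{0..L}. y x = Y x))"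
proof -
  have L: "L > 0" and M: "M > 0" and Npos: "N > 0" using assms by auto
  have p: "p absolutely_integrable_on {0..L}" using assms(4) .
  have L0: "0 \<le> L" using L by simp
  define Up where "Up = (\<lambda>x. LINT s:{0..L}|lebesgue. G L M x s * p s)"
  define V where "V = (\<lambda>x. LINT s:{0..L}|lebesgue. G L M x s)"
  obtain U1 U2 U3 NP where
    dU: "\<forall>x\<in>{0..L}. (Up has_real_derivative U1 x) (at x within {0..L})" and
    dU1: "\<forall>x\<in>{0..L}. (U1 has_real_derivative U2 x) (at x within {0..L})" and
    dU2: "\<forall>x\<in>{0..L}. (U2 has_real_derivative U3 x) (at x within {0..L})" and
    acU3: "abs_cont_on {0..L} U3" and cU3: "continuous_on {0..L} U3" and NP: "negligible NP" and
    aeU: "\<forall>x\<in>{0<..<L}. x \<notin> NP \<longrightarrow> (U3 has_real_derivative (p x + M * U2 x)) (at x)" and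
    bU: "Up 0 = 0" "Up L = 0" "U2 0 = 0" "U2 L = 0"
    using green_props2[OF L M p Up_def] by blast
  obtain V1 V2 V3 NV where
    dV: "\<forall>x\<in>{0..L}. (V has_real_derivative V1 x) (at x within {0..L})" and
    dV1: "\<forall>x\<in>{0..L}. (V1 has_real_derivative V2 x) (at x within {0..L})" and
    dV2: "\<forall>x\<in>{0..L}. (V2 has_real_derivative V3 x) (at x within {0..L})" and
    acV3: "abs_cont_on {0..L} V3" and cV3: "continuous_on {0..L} V3" and NV: "negligible NV" and
    aeV: "\<forall>x\<in>{0<..<L}. x \<notin> NV \<longrightarrow> (V3 has_real_derivative (1 + M * V2 x)) (at x)" and
    bV: "V 0 = 0" "V L = 0" "V2 0 = 0" "V2 L = 0"
    using green_props1[OF L M V_def] by blast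
  have cUp: "continuous_on {0..L} Up" by (rule deriv_within_cont[OF dU])
  have cU1: "continuous_on {0..L} U1" by (rule deriv_within_cont[OF dU1])
  have cU2: "continuous_on {0..L} U2" by (rule deriv_within_cont[OF dU2])
  have cV: "continuous_on {0..L} V" by (rule deriv_within_cont[OF dV])
  have cV1: "continuous_on {0..L} V1" by (rule deriv_within_cont[OF dV1])
  have cV2: "continuous_on {0..L} V2" by (rule deriv_within_cont[OF dV2])
  define Ip where "Ip = integral {0..L} Up"
  define I1 where "I1 = integral {0..L} V"
  have IUp: "(LINT x:{0..L}|lebesgue. Up x) = Ip"
    unfolding Ip_def by (rule set_lebesgue_integral_eq_integral(2)[OF absolutely_integrable_continuous_real[OF cUp]])
  have IV: "(LINT x:{0..L}|lebesgue. V x) = I1"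
    unfolding I1_def by (rule set_lebesgue_integral_eq_integral(2)[OF absolutely_integrable_continuous_real[OF cV]])
  have dV3: "\<forall>x\<in>{0..L}. (V3 has_real_derivative (1 + M * V2 x)) (at x within {0..L})"
  proof
    fix x assume x: "x \<in> {0..L}"
    show "(V3 has_real_derivative (1 + M * V2 x)) (at x within {0..L})"
    proof (rule ac_ae_deriv(2)[OF L0 acV3 _ NV _ x])
      show "continuous_on {0..L} (\<lambda>x. 1 + M * V2 x)" using cV2 by (intro continuous_intros)
      fix y assume "y \<in> {0<..<L}" "y \<notin> NV"
      then show "(V3 has_real_derivative (1 + M * V2 y)) (at y)" using aeV by blast
    qed
  qed
  have cV4: "continuous_on {0..L} (\<lambda>x. 1 + M * V2 x)" using cV2 by (intro continuous_intros)
  have "integral {0..L} (\<lambda>x. V x * ((1 + M * V2 x) - M * V2 x)) = integral {0..L} (\<lambda>x. (V2 x)\<^sup>2 + M * (V1 x)\<^sup>2)"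
    by (rule energy[OF L0 dV dV1 dV2 dV3 cV4 bV])
  then have "I1 = integral {0..L} (\<lambda>x. (V2 x)\<^sup>2 + M * (V1 x)\<^sup>2)" unfolding I1_def by simp
  also have "\<dots> \<ge> 0"
    using cV1 cV2 M by (intro integral_nonneg integrable_continuous_interval continuous_intros) auto
  finally have I1nn: "I1 \<ge> 0" .
  define D where "D = 1 + N * I1"
  have Dpos: "D > 0" unfolding D_def using I1nn Npos by (simp add: add_pos_nonneg)
  define k where "k = N * Ip / D"
  have kD: "N * (Ip - k * I1) = k" unfolding k_def using Dpos unfolding D_def by (simp add: field_simps)
  define Y where "Y = (\<lambda>x. (LINT s:{0..L}|lebesgue. G L M x s * p s)
            - N * (LINT s:{0..L}|lebesgue. G L M x s)
              / (1 + N * (LINT x':{0..L}|lebesgue. LINT s:{0..L}|lebesgue. G L M x' s))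
              * (LINT x':{0..L}|lebesgue. LINT s:{0..L}|lebesgue. G L M x' s * p s))"
  have e1: "(LINT x':{0..L}|lebesgue. LINT s:{0..L}|lebesgue. G L M x' s * p s) = Ip"
    using IUp unfolding Up_def by simp
  have e2: "(LINT x':{0..L}|lebesgue. LINT s:{0..L}|lebesgue. G L M x' s) = I1"
    using IV unfolding V_def by simp
  have Yfun: "Y = (\<lambda>x. Up x - k * V x)"
    unfolding Y_def e1 e2 k_def D_def Up_def V_def by (rule ext) (simp add: divide_inverse mult_ac)
  define Y1 where "Y1 = (\<lambda>x. U1 x - k * V1 x)"
  define Y2 where "Y2 = (\<lambda>x. U2 x - k * V2 x)"
  define Y3 where "Y3 = (\<lambda>x. U3 x - k * V3 x)"
  have dY: "\<forall>x\<in>{0..L}. (Y has_real_derivative Y1 x) (at x within {0..L})"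
    unfolding Yfun Y1_def using dU dV by (auto intro!: DERIV_diff DERIV_cmult)
  have dY1: "\<forall>x\<in>{0..L}. (Y1 has_real_derivative Y2 x) (at x within {0..L})"
    unfolding Y1_def Y2_def using dU1 dV1 by (auto intro!: DERIV_diff DERIV_cmult)
  have dY2: "\<forall>x\<in>{0..L}. (Y2 has_real_derivative Y3 x) (at x within {0..L})"
    unfolding Y2_def Y3_def using dU2 dV2 by (auto intro!: DERIV_diff DERIV_cmult)
  have bddV3: "bounded (V3 ` {0..L})"
    by (rule compact_imp_bounded, rule compact_continuous_image[OF cV3]) auto
  have acY3: "abs_cont_on {0..L} Y3"
    unfolding Y3_def by (rule ac_diff[OF acU3 ac_cmult[OF acV3 bddV3]])
  have cY: "continuous_on {0..L} Y" unfolding Yfun using cUp cV by (intro continuous_intros)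
  have IY: "(LINT t:{0..L}|lebesgue. Y t) = Ip - k * I1"
  proof -
    have "(LINT t:{0..L}|lebesgue. Y t) = integral {0..L} Y"
      by (rule set_lebesgue_integral_eq_integral(2)[OF absolutely_integrable_continuous_real[OF cY]])
    also have "\<dots> = integral {0..L} Up - k * integral {0..L} V"
      unfolding Yfun using cUp cV
      by (subst integral_diff) (auto intro!: integrable_continuous_interval integrable_on_mult_right)
    finally show ?thesis unfolding Ip_def I1_def .
  qed
  have aeY: "(Y3 has_real_derivative (p x + M * Y2 x - k)) (at x)" if x: "x \<in> {0<..<L}" "x \<notin> NP \<union> NV" for x
  proof -
    have "((\<lambda>x. U3 x - k * V3 x) has_real_derivative ((p x + M * U2 x) - k * (1 + M * V2 x))) (at x)"
      using aeU aeV x by (intro DERIV_diff DERIV_cmult) auto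
    then show ?thesis unfolding Y3_def Y2_def by (rule DERIV_cong) (simp add: algebra_simps)
  qed
  have existence: "bvp_solution L M N p Y"
    unfolding bvp_solution_def
  proof (rule exI[of _ Y1], rule exI[of _ Y2], rule exI[of _ Y3], intro conjI)
    show "\<forall>x\<in>{0..L}. (Y has_real_derivative Y1 x) (at x within {0..L})" by (rule dY)
    show "\<forall>x\<in>{0..L}. (Y1 has_real_derivative Y2 x) (at x within {0..L})" by (rule dY1)
    show "\<forall>x\<in>{0..L}. (Y2 has_real_derivative Y3 x) (at x within {0..L})" by (rule dY2)
    show "abs_cont_on {0..L} Y3" by (rule acY3)
    show "Y 0 = 0" unfolding Yfun using bU bV by simp
    show "Y L = 0" unfolding Yfun using bU bV by simp
    show "Y2 0 = 0" unfolding Y2_def using bU bV by simp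
    show "Y2 L = 0" unfolding Y2_def using bU bV by simp
    show "AE x in lebesgue. x \<in> {0<..<L} \<longrightarrow> (\<exists>y4. (Y3 has_real_derivative y4) (at x) \<and>
            y4 - M * Y2 x + N * (LINT t:{0..L}|lebesgue. Y t) = p x)"
      unfolding eventually_ae_filter_negligible
    proof (intro exI[of _ "NP \<union> NV"] conjI)
      show "negligible (NP \<union> NV)" using NP NV by auto
      show "{x. \<not> (x \<in> {0<..<L} \<longrightarrow> (\<exists>y4. (Y3 has_real_derivative y4) (at x) \<and>
            y4 - M * Y2 x + N * (LINT t:{0..L}|lebesgue. Y t) = p x))} \<subseteq> NP \<union> NV"
      proof (rule subsetI, rule ccontr)
        fix x assume x: "x \<in> {x. \<not> (x \<in> {0<..<L} \<longrightarrow> (\<exists>y4. (Y3 has_real_derivative y4) (at x) \<and>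
            y4 - M * Y2 x + N * (LINT t:{0..L}|lebesgue. Y t) = p x))}" and xn: "x \<notin> NP \<union> NV"
        then have x0: "x \<in> {0<..<L}" by auto
        have "(p x + M * Y2 x - k) - M * Y2 x + N * (LINT t:{0..L}|lebesgue. Y t) = p x"
          unfolding IY using kD by simp
        then show False using x aeY[OF x0 xn] by blast
      qed
    qed
  qed
  have uniqueness: "\<forall>x\<in>{0..L}. y x = Y x" if y: "bvp_solution L M N p y" for y
  proof -
    obtain y1 y2 y3 where
      dy: "\<forall>x\<in>{0..L}. (y has_real_derivative y1 x) (at x within {0..L})" and
      dy1: "\<forall>x\<in>{0..L}. (y1 has_real_derivative y2 x) (at x within {0..L})" and
      dy2: "\<forall>x\<in>{0..L}. (y2 has_real_derivative y3 x) (at x within {0..L})" and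
      acy3: "abs_cont_on {0..L} y3" and
      aey: "AE x in lebesgue. x \<in> {0<..<L} \<longrightarrow>
          (\<exists>y4. (y3 has_real_derivative y4) (at x) \<and>
                y4 - M * y2 x + N * (LINT t:{0..L}|lebesgue. y t) = p x)" and
      yb: "y 0 = 0" "y L = 0" "y2 0 = 0" "y2 L = 0"
      using y unfolding bvp_solution_def by blast
    obtain Ny where Ny: "negligible Ny" and NyS: "{x. \<not> (x \<in> {0<..<L} \<longrightarrow>
          (\<exists>y4. (y3 has_real_derivative y4) (at x) \<and>
                y4 - M * y2 x + N * (LINT t:{0..L}|lebesgue. y t) = p x))} \<subseteq> Ny"
      using aey unfolding eventually_ae_filter_negligible by blast
    have cy: "continuous_on {0..L} y" by (rule deriv_within_cont[OF dy])
    have cy2: "continuous_on {0..L} y2" by (rule deriv_within_cont[OF dy2])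
    have cY2: "continuous_on {0..L} Y2" by (rule deriv_within_cont[OF dY2])
    define Iy where "Iy = integral {0..L} y"
    have ILy: "(LINT t:{0..L}|lebesgue. y t) = Iy"
      unfolding Iy_def by (rule set_lebesgue_integral_eq_integral(2)[OF absolutely_integrable_continuous_real[OF cy]])
    define z where "z = (\<lambda>x. y x - Y x)"
    define z1 where "z1 = (\<lambda>x. y1 x - Y1 x)"
    define z2 where "z2 = (\<lambda>x. y2 x - Y2 x)"
    define z3 where "z3 = (\<lambda>x. y3 x - Y3 x)"
    define Iz where "Iz = Iy - (Ip - k * I1)"
    define K where "K = N * Iz"
    have dz: "\<forall>x\<in>{0..L}. (z has_real_derivative z1 x) (at x within {0..L})"
      unfolding z_def z1_def using dy dY by (auto intro!: DERIV_diff)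
    have dz1: "\<forall>x\<in>{0..L}. (z1 has_real_derivative z2 x) (at x within {0..L})"
      unfolding z1_def z2_def using dy1 dY1 by (auto intro!: DERIV_diff)
    have dz2: "\<forall>x\<in>{0..L}. (z2 has_real_derivative z3 x) (at x within {0..L})"
      unfolding z2_def z3_def using dy2 dY2 by (auto intro!: DERIV_diff)
    have acz3: "abs_cont_on {0..L} z3" unfolding z3_def by (rule ac_diff[OF acy3 acY3])
    have cz2: "continuous_on {0..L} z2" unfolding z2_def using cy2 cY2 by (intro continuous_intros)
    have cz4: "continuous_on {0..L} (\<lambda>x. M * z2 x - K)" using cz2 by (intro continuous_intros)
    have dz3: "\<forall>x\<in>{0..L}. (z3 has_real_derivative (M * z2 x - K)) (at x within {0..L})"
    proof
      fix x assume x: "x \<in> {0..L}"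
      show "(z3 has_real_derivative (M * z2 x - K)) (at x within {0..L})"
      proof (rule ac_ae_deriv(2)[OF L0 acz3 cz4 _ _ x])
        show "negligible (Ny \<union> NP \<union> NV)" using Ny NP NV by auto
        fix u assume u: "u \<in> {0<..<L}" "u \<notin> Ny \<union> NP \<union> NV"
        then obtain y4 where y4: "(y3 has_real_derivative y4) (at u)"
          "y4 - M * y2 u + N * (LINT t:{0..L}|lebesgue. y t) = p u"
          using NyS by blast
        have "(z3 has_real_derivative (y4 - (p u + M * Y2 u - k))) (at u)"
          unfolding z3_def using y4(1) aeY[of u] u by (intro DERIV_diff) auto
        moreover have "y4 - (p u + M * Y2 u - k) = M * z2 u - K"
          using y4(2) kD unfolding ILy z2_def K_def Iz_def by (simp add: algebra_simps)
        ultimately show "(z3 has_real_derivative (M * z2 u - K)) (at u)" by simp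
      qed
    qed
    have bz: "z 0 = 0" "z L = 0" "z2 0 = 0" "z2 L = 0"
      unfolding z_def z2_def using yb bU bV
      by (simp_all add: Yfun Y2_def)
    have E: "integral {0..L} (\<lambda>x. z x * ((M * z2 x - K) - M * z2 x)) = integral {0..L} (\<lambda>x. (z2 x)\<^sup>2 + M * (z1 x)\<^sup>2)"
      by (rule energy[OF L0 dz dz1 dz2 dz3 cz4 bz])
    have cz: "continuous_on {0..L} z" by (rule deriv_within_cont[OF dz])
    have cz1: "continuous_on {0..L} z1" by (rule deriv_within_cont[OF dz1])
    have Izeq: "integral {0..L} z = Iz"
    proof -
      have "integral {0..L} z = integral {0..L} y - integral {0..L} Y"
        unfolding z_def using cy cY by (intro integral_diff integrable_continuous_interval)
      also have "integral {0..L} Y = Ip - k * I1"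
        using IY set_lebesgue_integral_eq_integral(2)[OF absolutely_integrable_continuous_real[OF cY]] by simp
      finally show ?thesis unfolding Iz_def Iy_def .
    qed
    have E1: "integral {0..L} (\<lambda>x. z x * ((M * z2 x - K) - M * z2 x)) = - K * Iz"
    proof -
      have "integral {0..L} (\<lambda>x. z x * ((M * z2 x - K) - M * z2 x)) = integral {0..L} (\<lambda>x. (- K) * z x)"
        by (intro integral_cong) (simp add: algebra_simps)
      also have "\<dots> = - K * integral {0..L} z" by simp
      finally show ?thesis unfolding Izeq .
    qed
    have E2: "- N * Iz * Iz = integral {0..L} (\<lambda>x. (z2 x)\<^sup>2 + M * (z1 x)\<^sup>2)"
    proof -
      have "- N * Iz * Iz = - K * Iz" unfolding K_def by simp
      also have "\<dots> = integral {0..L} (\<lambda>x. z x * ((M * z2 x - K) - M * z2 x))" using E1 by (rule sym)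
      also have "\<dots> = integral {0..L} (\<lambda>x. (z2 x)\<^sup>2 + M * (z1 x)\<^sup>2)" by (rule E)
      finally show ?thesis .
    qed
    have nn: "integral {0..L} (\<lambda>x. (z2 x)\<^sup>2 + M * (z1 x)\<^sup>2) \<ge> 0"
      using cz1 cz2 M by (intro integral_nonneg integrable_continuous_interval continuous_intros) auto
    have NI: "N * (Iz * Iz) \<le> 0" using E2 nn by simp
    have "Iz * Iz \<le> 0"
    proof (rule ccontr)
      assume "\<not> Iz * Iz \<le> 0"
      then have "N * (Iz * Iz) > 0" using Npos by simp
      then show False using NI by simp
    qed
    moreover have "Iz * Iz \<ge> 0" by simp
    ultimately have "Iz * Iz = 0" by linarith
    then have "integral {0..L} (\<lambda>x. (z2 x)\<^sup>2 + M * (z1 x)\<^sup>2) = 0" using E2 by simp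
    moreover have cq: "continuous_on {0..L} (\<lambda>x. (z2 x)\<^sup>2 + M * (z1 x)\<^sup>2)"
      using cz1 cz2 by (intro continuous_intros)
    moreover have "\<And>x. x \<in> {0..L} \<Longrightarrow> (z2 x)\<^sup>2 + M * (z1 x)\<^sup>2 \<ge> 0" using M by auto
    ultimately have zero: "\<forall>x\<in>{0..L}. (z2 x)\<^sup>2 + M * (z1 x)\<^sup>2 = 0"
      using integral_eq_0_iff[OF cq L] by blast
    have z10: "z1 x = 0" if "x \<in> {0..L}" for x
    proof -
      have "(z2 x)\<^sup>2 + M * (z1 x)\<^sup>2 = 0" using zero that by blast
      moreover have "(z2 x)\<^sup>2 \<ge> 0" "M * (z1 x)\<^sup>2 \<ge> 0" using M by auto
      ultimately have "M * (z1 x)\<^sup>2 = 0" by linarith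
      then show ?thesis using M by simp
    qed
    have "\<exists>c. \<forall>x\<in>{0..L}. z x = c"
    proof (rule has_field_derivative_zero_constant)
      show "convex {0..L::real}" by simp
      fix x assume "x \<in> {0..L}"
      then show "(z has_field_derivative 0) (at x within {0..L})" using dz z10 by metis
    qed
    then obtain c where c: "\<forall>x\<in>{0..L}. z x = c" by blast
    have "c = 0" using c bz(1) L by auto
    then show ?thesis using c unfolding z_def by auto
  qed
  have main: "bvp_solution L M N p Y \<and> (\<forall>y. bvp_solution L M N p y \<longrightarrow> (\<forall>x\<in>{0..L}. y x = Y x))"
    using existence uniqueness by blast
  show ?thesis using main unfolding Y_def Let_def .
qed


end
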